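(* Consider $\min_x f(x)=\frac1n\sum_{i=1}^nf_i(x)$ where each $f_i$ is $\mu$-strongly convex, with unique minimizer $x^*$, run Algorithm BL2 (described in the context), and suppose the constants $H,H_1,M_1,M_2,R$ of the context satisfy the stated inequalities. (i) Suppose each $\mathcal{Q}_i^k$ is an unbiased compressor with parameter $\omega_{\rm M}$ and $0<\eta\le1/(\omega_{\rm M}+1)$; for all $i\in[n]$, $j\in[d]$, $k\ge0$, $(z_i^k)_j$ is a convex combination of $\{(x^t)_j\}_{t=0}^k$; and for all $i,j,l,k$, $(\mathbf{L}_i^k)_{jl}$ is a convex combination of $\{h^i(\nabla^2f_i(z_i^t))_{jl}\}_{t=0}^k$. If $\|x^0-x^*\|^2\le\tilde c_3:=\min\left\{\frac{\mu^2}{d^2(6H^2+24H_1^2)},\frac{\mu^2}{96d^4N_{\rm B}R^2M_2^2}\right\}$, then $\|z_i^k-x^*\|^2\le d\,\tilde c_3$ and $\mathcal{H}^k\le\frac{\mu^2}{96dN_{\rm B}R^2}$ for all $i\in[n]$ and $k\ge0$. (ii) Suppose each $\mathcal{Q}_i^k$ is a deterministic contraction compressor with parameter $\delta_{\rm M}$ and $\eta=1$, and each $\mathcal{C}_i^k$ is a deterministic contraction compressor with parameter $\delta$ and $\alpha=1$; set $(A_{\rm M},B_{\rm M}):=(\delta_{\rm M}/4,6/\delta_{\rm M}-7/2)$, $(A,B):=(\delta/4,6/\delta-7/2)$ and $\tilde c_4:=\min\left\{\frac{A_{\rm M}\mu^2}{B_{\rm M}(6H^2+24H_1^2)},\frac{AA_{\rm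 M}\mu^2}{96N_{\rm B}R^2B_{\rm M}BM_1^2}\right\}$. If $\|z_i^0-x^*\|^2\le\tilde c_4$ and $\|\mathbf{L}_i^0-\mathbf{L}_i^*\|_{\rm F}^2\le\frac{A_{\rm M}\mu^2}{96N_{\rm B}R^2B_{\rm M}}$ for all $i\in[n]$, then $\|z_i^k-x^*\|^2\le\tilde c_4$ and $\|\mathbf{L}_i^k-\mathbf{L}_i^*\|_{\rm F}^2\le\frac{A_{\rm M}\mu^2}{96N_{\rm B}R^2B_{\rm M}}$ for all $i\in[n]$ and $k\ge0$.
   Context: Compressors: a randomized map on $\mathbb{R}^{d\times d}$ (or $\mathbb{R}^d$) is unbiased with parameter $\omega\ge0$ if $\mathbb{E}\mathcal{C}(\mathbf{A})=\mathbf{A}$ and $\mathbb{E}\|\mathcal{C}(\mathbf{A})\|_{\rm F}^2\le(\omega+1)\|\mathbf{A}\|_{\rm F}^2$; a contraction compressor with parameter $\delta\in(0,1]$ if $\mathbb{E}\|\mathbf{A}-\mathcal{C}(\mathbf{A})\|_{\rm F}^2\le(1-\delta)\|\mathbf{A}\|_{\rm F}^2$; deterministic means a fixed non-random map. Bases: for each $i$, $\{\mathbf{B}_i^{jl}\}_{j,l\in[d]}$ is a basis of $\mathbb{R}^{d\times d}$ and $h^i(\mathbf{A})$ is the coefficient matrix with $\mathbf{A}=\sum_{j,l}h^i(\mathbf{A})_{jl}\mathbf{B}_i^{jl}$; $N_{\rm B}:=1$ if all these bases are Frobenius-orthogonal, else $d^2$. Standing assumptions: for all $x,y$, $i$: $\|\nabla^2f_i(x)-\nabla^2f_i(y)\|\le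 H\|x-y\|$ (spectral), $\|\nabla^2f_i(x)-\nabla^2f_i(y)\|_{\rm F}\le H_1\|x-y\|$, $\|h^i(\nabla^2f_i(x))-h^i(\nabla^2f_i(y))\|_{\rm F}\le M_1\|x-y\|$, $\max_{j,l}|h^i(\nabla^2f_i(x))_{jl}-h^i(\nabla^2f_i(y))_{jl}|\le M_2\|x-y\|$, $\max_{j,l}\|\mathbf{B}_i^{jl}\|_{\rm F}\le R$. $[\mathbf{A}]_s:=(\mathbf{A}+\mathbf{A}^\top)/2$. Algorithm BL2 (parameters $\alpha,\eta>0$, $p\in(0,1]$, $0<\tau\le n$): initialize $w_i^0=z_i^0=x^0$ and matrices $\mathbf{L}_i^0$; $\mathbf{H}_i^k:=\sum_{j,l}(\mathbf{L}_i^k)_{jl}\mathbf{B}_i^{jl}$, $l_i^k:=\|[\mathbf{H}_i^k]_s-\nabla^2f_i(z_i^k)\|_{\rm F}$, $g_i^k:=([\mathbf{H}_i^k]_s+l_i^k\mathbf{I})w_i^k-\nabla f_i(w_i^k)$, and $\mathbf{H}^k,l^k,g^k$ are their averages over $i$. At iteration $k$: $x^{k+1}=([\mathbf{H}^k]_s+l^k\mathbf{I})^{-1}g^k$; a random $S^k\subseteq[n]$ is drawn with $\mathbb{P}[i\in S^k]=\tau/n$. For $i\in S^k$: $z_i^{k+1}=z_i^k+\eta\mathcal{Q}_i^k(x^{k+1}-z_i^k)$, $\mathbf{L}_i^{k+1}=\mathbf{L}_i^k+\alpha\,\mathcal{C}_i^k(h^i(\nabla^2f_i(z_i^{k+1}))-\mathbf{L}_i^k)$,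 and with an independent $\xi_i^k\sim$ Bernoulli$(p)$, $w_i^{k+1}=z_i^{k+1}$ if $\xi_i^k=1$, $w_i^{k+1}=w_i^k$ otherwise. For $i\notin S^k$: $z_i^{k+1}=z_i^k$, $w_i^{k+1}=w_i^k$, $\mathbf{L}_i^{k+1}=\mathbf{L}_i^k$. $\mathbf{L}_i^*:=h^i(\nabla^2f_i(x^* ))$, $\mathcal{H}^k:=\frac1n\sum_i\|\mathbf{L}_i^k-\mathbf{L}_i^*\|_{\rm F}^2$. *)

theory Defs
  imports "HOL-Probability.Probability"
begin

definition strongly_convex :: "real \<Rightarrow> ('a::real_normed_vector \<Rightarrow> real) \<Rightarrow> bool" where
  "strongly_convex mu f \<longleftrightarrow>
     (\<forall>x y t. 0 \<le> t \<and> t \<le> 1 \<longrightarrow>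
        f (t *\<^sub>R x + (1 - t) *\<^sub>R y) \<le> t * f x + (1 - t) * f y - mu / 2 * t * (1 - t) * (norm (x - y))\<^sup>2)"

(* Hmat Bi L = sum_{j,l} L_{jl} B_i^{jl}; norm on real^'n^'n is the Frobenius norm *)
definition Hmat :: "('n::finite \<Rightarrow> 'n \<Rightarrow> real^'n^'n) \<Rightarrow> real^'n^'n \<Rightarrow> real^'n^'n" where
  "Hmat Bi L = (\<Sum>j\<in>UNIV. \<Sum>l\<in>UNIV. (L $ j $ l) *\<^sub>R Bi j l)"

definition is_basis_mat :: "('n::finite \<Rightarrow> 'n \<Rightarrow> real^'n^'n) \<Rightarrow> bool" where
  "is_basis_mat Bi \<longleftrightarrow> (\<forall>A. \<exists>!L. A = Hmat Bi L)"

definition hcoef :: "('n::finite \<Rightarrow> 'n \<Rightarrow> real^'n^'n) \<Rightarrow> real^'n^'n \<Rightarrow> real^'n^'n" where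
  "hcoef Bi A = (THE L. A = Hmat Bi L)"

definition symm :: "real^'n::finite^'n \<Rightarrow> real^'n^'n" where
  "symm A = (1/2) *\<^sub>R (A + transpose A)"

definition NB :: "nat \<Rightarrow> (nat \<Rightarrow> 'n::finite \<Rightarrow> 'n \<Rightarrow> real^'n^'n) \<Rightarrow> real" where
  "NB n B = (if (\<forall>i<n. \<forall>j l j' l'. (j, l) \<noteq> (j', l') \<longrightarrow> inner (B i j l) (B i j' l') = 0)
             then 1 else real (CARD('n) ^ 2))"

definition maxabs :: "real^'n::finite^'n \<Rightarrow> real" where
  "maxabs A = Max {\<bar>A $ j $ l\<bar> | j l. True}"

definition unbiased_compressor ::
  "'w measure \<Rightarrow> real \<Rightarrow> ('w \<Rightarrow> 'v::{banach,second_countable_topology} \<Rightarrow> 'v) \<Rightarrow> bool" where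
  "unbiased_compressor M om C \<longleftrightarrow> om \<ge> 0 \<and>
     (\<forall>A. integrable M (\<lambda>s. C s A) \<and> (\<integral>s. C s A \<partial>M) = A \<and>
          (\<integral>\<^sup>+ s. ennreal ((norm (C s A))\<^sup>2) \<partial>M) \<le> ennreal ((om + 1) * (norm A)\<^sup>2))"

definition contraction_compressor :: "real \<Rightarrow> ('v::real_normed_vector \<Rightarrow> 'v) \<Rightarrow> bool" where
  "contraction_compressor delta D \<longleftrightarrow> 0 < delta \<and> delta \<le> 1 \<and>
     (\<forall>A. (norm (A - D A))\<^sup>2 \<le> (1 - delta) * (norm A)\<^sup>2)"

definition det_contraction_compressor ::
  "'w measure \<Rightarrow> real \<Rightarrow> ('w \<Rightarrow> 'v::real_normed_vector \<Rightarrow> 'v) \<Rightarrow> bool" where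
  "det_contraction_compressor M delta C \<longleftrightarrow>
     (\<exists>D. contraction_compressor delta D \<and> (\<forall>s\<in>space M. C s = D))"

definition bl2_xnext ::
  "nat \<Rightarrow> (nat \<Rightarrow> real^'n \<Rightarrow> real^'n) \<Rightarrow> (nat \<Rightarrow> real^'n \<Rightarrow> real^'n^'n) \<Rightarrow>
   (nat \<Rightarrow> 'n::finite \<Rightarrow> 'n \<Rightarrow> real^'n^'n) \<Rightarrow>
   (nat \<Rightarrow> real^'n) \<Rightarrow> (nat \<Rightarrow> real^'n) \<Rightarrow> (nat \<Rightarrow> real^'n^'n) \<Rightarrow> real^'n" where
  "bl2_xnext n g Hs B z w L =
     (let Hi = (\<lambda>i. Hmat (B i) (L i));
          li = (\<lambda>i. norm (symm (Hi i) - Hs i (z i)));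
          gi = (\<lambda>i. (symm (Hi i) + li i *\<^sub>R mat 1) *v w i - g i (w i));
          Hav = (1 / real n) *\<^sub>R (\<Sum>i<n. Hi i);
          lav = (1 / real n) * (\<Sum>i<n. li i);
          gav = (1 / real n) *\<^sub>R (\<Sum>i<n. gi i)
      in matrix_inv (symm Hav + lav *\<^sub>R mat 1) *v gav)"

(* state (z^k, w^k, L^k); S k = S^k, xi k i = xi_i^k, Q i k = realized Q_i^k, C i k = realized C_i^k *)
primrec bl2_state ::
  "nat \<Rightarrow> (nat \<Rightarrow> real^'n \<Rightarrow> real^'n) \<Rightarrow> (nat \<Rightarrow> real^'n \<Rightarrow> real^'n^'n) \<Rightarrow>
   (nat \<Rightarrow> 'n::finite \<Rightarrow> 'n \<Rightarrow> real^'n^'n) \<Rightarrow> real \<Rightarrow> real \<Rightarrow>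
   (nat \<Rightarrow> nat set) \<Rightarrow> (nat \<Rightarrow> nat \<Rightarrow> bool) \<Rightarrow>
   (nat \<Rightarrow> nat \<Rightarrow> real^'n \<Rightarrow> real^'n) \<Rightarrow> (nat \<Rightarrow> nat \<Rightarrow> real^'n^'n \<Rightarrow> real^'n^'n) \<Rightarrow>
   real^'n \<Rightarrow> (nat \<Rightarrow> real^'n^'n) \<Rightarrow> nat \<Rightarrow>
   (nat \<Rightarrow> real^'n) \<times> (nat \<Rightarrow> real^'n) \<times> (nat \<Rightarrow> real^'n^'n)" where
  "bl2_state n g Hs B alpha eta S xi Q C x0 L0 0 = ((\<lambda>i. x0), (\<lambda>i. x0), L0)"
| "bl2_state n g Hs B alpha eta S xi Q C x0 L0 (Suc k) =
     (case bl2_state n g Hs B alpha eta S xi Q C x0 L0 k of (z, w, L) \<Rightarrow>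
       (let x' = bl2_xnext n g Hs B z w L;
            z' = (\<lambda>i. if i \<in> S k then z i + eta *\<^sub>R Q i k (x' - z i) else z i);
            L' = (\<lambda>i. if i \<in> S k then L i + alpha *\<^sub>R C i k (hcoef (B i) (Hs i (z' i)) - L i) else L i);
            w' = (\<lambda>i. if i \<in> S k \<and> xi k i then z' i else w i)
        in (z', w', L')))"

definition bl2_z where
  "bl2_z n g Hs B alpha eta S xi Q C x0 L0 k = fst (bl2_state n g Hs B alpha eta S xi Q C x0 L0 k)"
definition bl2_L where
  "bl2_L n g Hs B alpha eta S xi Q C x0 L0 k = snd (snd (bl2_state n g Hs B alpha eta S xi Q C x0 L0 k))"

fun bl2_x where
  "bl2_x n g Hs B alpha eta S xi Q C x0 L0 0 = x0"
| "bl2_x n g Hs B alpha eta S xi Q C x0 L0 (Suc k) =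
     (case bl2_state n g Hs B alpha eta S xi Q C x0 L0 k of (z, w, L) \<Rightarrow> bl2_xnext n g Hs B z w L)"

end

theory Submission
  imports Defs
begin

lemma mat_vec_norm:
  fixes A :: "real^'n::finite^'m::finite"
  shows "norm (A *v x) \<le> norm A * norm x"
proof -
  have row: "\<bar>(A *v x) $ j\<bar> \<le> norm (A $ j) * norm x" for j
  proof -
    have "(A *v x) $ j = inner (A $ j) x"
      by (simp add: matrix_vector_mult_def inner_vec_def)
    then show ?thesis using Cauchy_Schwarz_ineq2 by simp
  qed
  have "(norm (A *v x))\<^sup>2 = (\<Sum>j\<in>UNIV. ((A *v x) $ j)\<^sup>2)"
    unfolding power2_norm_eq_inner inner_vec_def by (simp add: power2_eq_square)
  also have "\<dots> \<le> (\<Sum>j\<in>UNIV. (norm (A $ j) * norm x)\<^sup>2)"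
    apply (rule sum_mono)
    using row by (metis abs_ge_zero power2_abs power_mono)
  also have "\<dots> = (\<Sum>j\<in>UNIV. (norm (A $ j))\<^sup>2) * (norm x)\<^sup>2"
    by (simp add: power_mult_distrib sum_distrib_right)
  also have "(\<Sum>j\<in>UNIV. (norm (A $ j))\<^sup>2) = (norm A)\<^sup>2"
    by (simp add: power2_norm_eq_inner inner_vec_def)
  finally have "(norm (A *v x))\<^sup>2 \<le> (norm A * norm x)\<^sup>2"
    by (simp add: power_mult_distrib)
  then show ?thesis
    by (meson mult_nonneg_nonneg norm_ge_zero power2_le_imp_le)
qed

lemma quad_lower:
  fixes A :: "real^'n::finite^'n"
  shows "inner v (A *v v) \<ge> - (norm A * (norm v)\<^sup>2)"
proof -
  have "\<bar>inner v (A *v v)\<bar> \<le> norm v * norm (A *v v)" by (rule Cauchy_Schwarz_ineq2)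
  also have "\<dots> \<le> norm v * (norm A * norm v)" by (simp add: mat_vec_norm mult_left_mono)
  finally show ?thesis by (simp add: power2_eq_square algebra_simps)
qed

lemma inner_transpose: "inner v (transpose A *v v) = inner v ((A::real^'n::finite^'n) *v v)"
  by (metis dot_lmul_matrix inner_commute transpose_matrix_vector)

lemma inner_symm: "inner v (symm A *v v) = inner v ((A::real^'n::finite^'n) *v v)"
proof -
  have "symm A *v v = (1/2) *\<^sub>R (A *v v + transpose A *v v)"
    by (simp add: symm_def vec_eq_iff matrix_vector_mult_def sum.distrib sum_distrib_left algebra_simps)
  then show ?thesis by (simp add: inner_add_right inner_commute[of v "v v* A"] dot_lmul_matrix)
qed

lemma norm_transpose: "norm (transpose (A::real^'n::finite^'m::finite)) = norm A"
proof -
  have "(norm (transpose A))\<^sup>2 = (norm A)\<^sup>2"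
    unfolding power2_norm_eq_inner inner_vec_def transpose_def
    by (simp, rule sum.swap)
  then show ?thesis by simp
qed

lemma symm_diff: "symm A - symm B = symm (A - B)"
  by (simp add: symm_def transpose_def algebra_simps vec_eq_iff)

lemma norm_symm: "norm (symm (A::real^'n::finite^'n)) \<le> norm A"
proof -
  have "norm (symm A) = (1/2) * norm (A + transpose A)" by (simp add: symm_def)
  also have "\<dots> \<le> (1/2) * (norm A + norm (transpose A))"
    by (simp add: norm_triangle_ineq)
  finally show ?thesis by (simp add: norm_transpose)
qed

lemma taylor_bound:
  fixes g :: "real^'n::finite \<Rightarrow> real^'n" and Hs :: "real^'n \<Rightarrow> real^'n^'n"
  assumes der: "\<And>x. (g has_derivative (\<lambda>h. Hs x *v h)) (at x)"
    and lip: "\<And>x y. onorm (\<lambda>v. (Hs x - Hs y) *v v) \<le> H * norm (x - y)"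
  shows "norm (g w - g x - Hs x *v (w - x)) \<le> H * (norm (w - x))\<^sup>2"
proof -
  let ?S = "closed_segment x w"
  have d: "((\<lambda>y. g y - Hs x *v y) has_derivative (\<lambda>h. (Hs y - Hs x) *v h)) (at y within ?S)" for y
  proof -
    have "((\<lambda>y. g y - Hs x *v y) has_derivative (\<lambda>h. Hs y *v h - Hs x *v h)) (at y)"
      by (intro derivative_intros der bounded_linear_imp_has_derivative) simp
    then show ?thesis
      by (simp add: matrix_vector_mult_diff_rdistrib has_derivative_at_withinI)
  qed
  have b: "onorm (\<lambda>h. (Hs y - Hs x) *v h) \<le> H * norm (w - x)" if "y \<in> ?S" for y
  proof -
    have 1: "norm (y - x) \<le> norm (w - x)" using that
      by (rule segment_bound1)
    have 2: "0 \<le> H * norm (0 - (1::real^'n))" using lip[of 0 1] onorm_pos_le[of "\<lambda>v. (Hs 0 - Hs 1) *v v"]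
      by simp
    have "norm (0 - (1::real^'n)) > 0" by simp
    with 2 have "H \<ge> 0" by (simp add: zero_le_mult_iff)
    then have "H * norm (y - x) \<le> H * norm (w - x)" using 1 by (simp add: mult_left_mono)
    then show ?thesis using lip[of y x] by linarith
  qed
  have "norm ((g w - Hs x *v w) - (g x - Hs x *v x)) \<le> H * norm (w - x) * norm (w - x)"
    by (rule differentiable_bound[OF convex_closed_segment d b]) auto
  then show ?thesis by (simp add: matrix_vector_mult_diff_distrib power2_eq_square algebra_simps)
qed

lemma eps_le:
  fixes A B K :: real
  assumes "\<And>t. 0 < t \<Longrightarrow> t < 1 \<Longrightarrow> A \<le> B + t * K"
  shows "A \<le> B"
proof (rule ccontr)
  assume "\<not> A \<le> B"
  define t where "t = min (1/2) ((A - B) / (2 * (\<bar>K\<bar> + 1)))"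
  have t0: "0 < t" "t < 1" using \<open>\<not> A \<le> B\<close> by (auto simp: t_def)
  have "t * K \<le> t * (\<bar>K\<bar> + 1)" using t0 by (intro mult_left_mono) auto
  also have "\<dots> \<le> (A - B) / (2 * (\<bar>K\<bar> + 1)) * (\<bar>K\<bar> + 1)"
    by (intro mult_right_mono) (auto simp: t_def)
  also have "\<dots> = (A - B) / 2" by (simp add: field_simps)
  finally have "t * K \<le> (A - B) / 2" .
  moreover have "A \<le> B + t * K" using assms[OF t0] .
  ultimately have "A - B \<le> (A - B) / 2" by linarith
  then show False using \<open>\<not> A \<le> B\<close> by (simp add: field_simps)
qed

lemma line_deriv:
  fixes f :: "real^'n::finite \<Rightarrow> real"
  assumes "\<And>x. (f has_derivative (\<lambda>h. g x \<bullet> h)) (at x)"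
  shows "((\<lambda>s. f (p + s *\<^sub>R u)) has_real_derivative (g (p + s *\<^sub>R u) \<bullet> u)) (at s)"
proof -
  have "((\<lambda>s. p + s *\<^sub>R u) has_derivative (\<lambda>t. t *\<^sub>R u)) (at s)"
    by (auto intro!: derivative_eq_intros)
  from has_derivative_compose[OF this assms]
  have "((\<lambda>s. f (p + s *\<^sub>R u)) has_derivative (\<lambda>t. g (p + s *\<^sub>R u) \<bullet> (t *\<^sub>R u))) (at s)" .
  moreover have "(\<lambda>t. g (p + s *\<^sub>R u) \<bullet> (t *\<^sub>R u)) = (*) (g (p + s *\<^sub>R u) \<bullet> u)"
    by (auto simp: inner_scaleR_right)
  ultimately show ?thesis by (simp add: has_field_derivative_def)
qed

lemma onorm_matvec: "onorm (\<lambda>v. (A::real^'n::finite^'m::finite) *v v) \<le> norm A"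
  by (rule onorm_le) (simp add: mat_vec_norm)

lemma H_nonneg:
  fixes Hs :: "real^'n::finite \<Rightarrow> real^'n^'n"
  assumes lip: "\<And>x y. onorm (\<lambda>v. (Hs x - Hs y) *v v) \<le> H * norm (x - y)"
  shows "H \<ge> 0"
proof -
  have 2: "0 \<le> H * norm (0 - (1::real^'n))" using lip[of 0 1] onorm_pos_le[of "\<lambda>v. (Hs 0 - Hs 1) *v v"]
    by simp
  have "norm (0 - (1::real^'n)) > 0" by simp
  with 2 show "H \<ge> 0" by (simp add: zero_le_mult_iff)
qed

lemma app_bound:
  fixes A :: "real^'n::finite^'n"
  assumes "onorm (\<lambda>v. A *v v) \<le> c"
  shows "norm (A *v w) \<le> c * norm w"
proof -
  have "norm (A *v w) \<le> onorm (\<lambda>v. A *v v) * norm w" by (rule onorm) simp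
  also have "\<dots> \<le> c * norm w" using assms by (simp add: mult_right_mono)
  finally show ?thesis .
qed

lemma hess_delta:
  fixes f :: "real^'n::finite \<Rightarrow> real" and g :: "real^'n \<Rightarrow> real^'n" and Hs :: "real^'n \<Rightarrow> real^'n^'n"
  assumes grad: "\<And>x. (f has_derivative (\<lambda>h. g x \<bullet> h)) (at x)"
    and hess: "\<And>x. (g has_derivative (\<lambda>h. Hs x *v h)) (at x)"
    and lip: "\<And>x y. onorm (\<lambda>v. (Hs x - Hs y) *v v) \<le> H * norm (x - y)"
    and h: "h > 0"
  shows "\<bar>(f (x + h *\<^sub>R u + h *\<^sub>R v) - f (x + h *\<^sub>R u) - f (x + h *\<^sub>R v) + f x)
           - h\<^sup>2 * ((Hs x *v v) \<bullet> u)\<bar>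
         \<le> h ^ 3 * (norm u * H * ((norm v)\<^sup>2 + norm u * norm v))"
proof -
  have H0: "H \<ge> 0" by (rule H_nonneg[OF lip])
  define c where "c = (Hs x *v v) \<bullet> u"
  define F where "F s = f (x + h *\<^sub>R v + s *\<^sub>R u) - f (x + s *\<^sub>R u) - (h * c) * s" for s
  define F' where "F' s = g (x + h *\<^sub>R v + s *\<^sub>R u) \<bullet> u - g (x + s *\<^sub>R u) \<bullet> u - h * c" for s
  have dF: "(F has_real_derivative F' s) (at s)" for s
    unfolding F_def F'_def
  proof -
    have a: "((\<lambda>s. f (x + h *\<^sub>R v + s *\<^sub>R u)) has_real_derivative g (x + h *\<^sub>R v + s *\<^sub>R u) \<bullet> u) (at s)"
      by (rule line_deriv[OF grad])
    have b: "((\<lambda>s. f (x + s *\<^sub>R u)) has_real_derivative g (x + s *\<^sub>R u) \<bullet> u) (at s)"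
      by (rule line_deriv[OF grad])
    have c: "((\<lambda>s. (h * c) * s) has_real_derivative h * c) (at s)"
      by (rule DERIV_cmult_Id)
    show "((\<lambda>s. f (x + h *\<^sub>R v + s *\<^sub>R u) - f (x + s *\<^sub>R u) - (h * c) * s) has_real_derivative
        g (x + h *\<^sub>R v + s *\<^sub>R u) \<bullet> u - g (x + s *\<^sub>R u) \<bullet> u - h * c) (at s)"
      by (intro DERIV_diff a b c)
  qed
  obtain z where z: "0 < z" "z < h" "F h - F 0 = (h - 0) * F' z"
    using MVT2[OF h, of F F'] dF by blast
  let ?y = "x + z *\<^sub>R u"
  have "F' z = (g (?y + h *\<^sub>R v) - g ?y - Hs ?y *v (h *\<^sub>R v)) \<bullet> u + ((Hs ?y - Hs x) *v (h *\<^sub>R v)) \<bullet> u"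
    by (simp add: F'_def c_def algebra_simps inner_diff_left inner_add_left
          matrix_vector_mult_diff_rdistrib scaleR_matrix_vector_assoc[symmetric])
  then have "\<bar>F' z\<bar> \<le> norm (g (?y + h *\<^sub>R v) - g ?y - Hs ?y *v (h *\<^sub>R v)) * norm u
      + norm ((Hs ?y - Hs x) *v (h *\<^sub>R v)) * norm u"
    by (smt (verit) Cauchy_Schwarz_ineq2 inner_commute norm_mult)
  also have "\<dots> \<le> (H * (norm (h *\<^sub>R v))\<^sup>2) * norm u + (H * norm (z *\<^sub>R u) * norm (h *\<^sub>R v)) * norm u"
  proof (intro add_mono mult_right_mono)
    show "norm (g (?y + h *\<^sub>R v) - g ?y - Hs ?y *v (h *\<^sub>R v)) \<le> H * (norm (h *\<^sub>R v))\<^sup>2"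
      using taylor_bound[OF hess lip, of "?y + h *\<^sub>R v" ?y] by simp
    show "norm ((Hs ?y - Hs x) *v (h *\<^sub>R v)) \<le> H * norm (z *\<^sub>R u) * norm (h *\<^sub>R v)"
      using app_bound[OF lip[of ?y x], of "h *\<^sub>R v"] by simp
  qed auto
  also have "\<dots> \<le> h\<^sup>2 * (norm u * H * ((norm v)\<^sup>2 + norm u * norm v))"
  proof -
    have "norm (z *\<^sub>R u) \<le> h * norm u" using z by (simp add: mult_right_mono)
    then have "H * norm (z *\<^sub>R u) * norm (h *\<^sub>R v) * norm u \<le> H * (h * norm u) * norm (h *\<^sub>R v) * norm u"
      using H0 h by (intro mult_right_mono mult_left_mono) auto
    then show ?thesis using h by (simp add: power2_eq_square algebra_simps)
  qed
  finally have Fb: "\<bar>F' z\<bar> \<le> h\<^sup>2 * (norm u * H * ((norm v)\<^sup>2 + norm u * norm v))" .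
  have FF: "F h - F 0 = (f (x + h *\<^sub>R u + h *\<^sub>R v) - f (x + h *\<^sub>R u) - f (x + h *\<^sub>R v) + f x) - h\<^sup>2 * c"
    by (simp add: F_def algebra_simps power2_eq_square)
  then have "\<bar>(f (x + h *\<^sub>R u + h *\<^sub>R v) - f (x + h *\<^sub>R u) - f (x + h *\<^sub>R v) + f x) - h\<^sup>2 * c\<bar> = h * \<bar>F' z\<bar>"
  proof -
    have "F h - F 0 = h * F' z" using z by simp
    then have "\<bar>F h - F 0\<bar> = h * \<bar>F' z\<bar>" using h by (simp add: abs_mult)
    then show ?thesis using FF by simp
  qed
  also have "\<dots> \<le> h * (h\<^sup>2 * (norm u * H * ((norm v)\<^sup>2 + norm u * norm v)))"
    using Fb h by (simp add: mult_left_mono)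
  finally show ?thesis by (simp add: c_def power3_eq_cube power2_eq_square algebra_simps)
qed

lemma hess_symm:
  fixes f :: "real^'n::finite \<Rightarrow> real" and g :: "real^'n \<Rightarrow> real^'n" and Hs :: "real^'n \<Rightarrow> real^'n^'n"
  assumes grad: "\<And>x. (f has_derivative (\<lambda>h. g x \<bullet> h)) (at x)"
    and hess: "\<And>x. (g has_derivative (\<lambda>h. Hs x *v h)) (at x)"
    and lip: "\<And>x y. onorm (\<lambda>v. (Hs x - Hs y) *v v) \<le> H * norm (x - y)"
  shows "transpose (Hs x) = Hs x"
proof -
  have key: "(Hs x *v v) \<bullet> u = (Hs x *v u) \<bullet> v" for u v
  proof -
    define K where "K = norm u * H * ((norm v)\<^sup>2 + norm u * norm v) + norm v * H * ((norm u)\<^sup>2 + norm v * norm u)"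
    have "\<bar>(Hs x *v v) \<bullet> u - (Hs x *v u) \<bullet> v\<bar> \<le> 0 + t * K" if t: "0 < t" "t < 1" for t
    proof -
      let ?D = "f (x + t *\<^sub>R u + t *\<^sub>R v) - f (x + t *\<^sub>R u) - f (x + t *\<^sub>R v) + f x"
      have 1: "\<bar>?D - t\<^sup>2 * ((Hs x *v v) \<bullet> u)\<bar> \<le> t ^ 3 * (norm u * H * ((norm v)\<^sup>2 + norm u * norm v))"
        by (rule hess_delta[OF grad hess lip t(1)])
      have 2: "\<bar>?D - t\<^sup>2 * ((Hs x *v u) \<bullet> v)\<bar> \<le> t ^ 3 * (norm v * H * ((norm u)\<^sup>2 + norm v * norm u))"
        using hess_delta[OF grad hess lip t(1), where u=v and v=u] by (simp add: algebra_simps)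
      have 3: "\<bar>t\<^sup>2 * ((Hs x *v v) \<bullet> u) - t\<^sup>2 * ((Hs x *v u) \<bullet> v)\<bar> \<le>
          t ^ 3 * (norm u * H * ((norm v)\<^sup>2 + norm u * norm v)) + t ^ 3 * (norm v * H * ((norm u)\<^sup>2 + norm v * norm u))"
        using 1 2 by linarith
      have "t\<^sup>2 * \<bar>(Hs x *v v) \<bullet> u - (Hs x *v u) \<bullet> v\<bar> \<le> t ^ 3 * K"
        using 3 unfolding K_def by (simp add: abs_mult right_diff_distrib[symmetric] distrib_left)
      then have "t\<^sup>2 * \<bar>(Hs x *v v) \<bullet> u - (Hs x *v u) \<bullet> v\<bar> \<le> t\<^sup>2 * (t * K)"
        by (simp add: power2_eq_square power3_eq_cube algebra_simps)
      then show ?thesis using t by simp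
    qed
    then have "\<bar>(Hs x *v v) \<bullet> u - (Hs x *v u) \<bullet> v\<bar> \<le> 0" by (rule eps_le)
    then show ?thesis by simp
  qed
  show ?thesis
  proof (simp add: vec_eq_iff transpose_def, intro allI)
    fix j l
    have "Hs x $ l $ j = (Hs x *v axis j 1) \<bullet> axis l 1"
      by (simp add: matrix_vector_mult_basis cart_eq_inner_axis[symmetric] column_def)
    also have "\<dots> = (Hs x *v axis l 1) \<bullet> axis j 1" by (rule key)
    also have "\<dots> = Hs x $ j $ l"
      by (simp add: matrix_vector_mult_basis cart_eq_inner_axis[symmetric] column_def)
    finally show "Hs x $ l $ j = Hs x $ j $ l" .
  qed
qed

lemma onorm_inner: "onorm (\<lambda>h. (c::real^'n::finite) \<bullet> h) \<le> norm c"
  by (rule onorm_le) (simp add: Cauchy_Schwarz_ineq2)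

lemma sc_first_order:
  fixes f :: "real^'n::finite \<Rightarrow> real" and g :: "real^'n \<Rightarrow> real^'n" and Hs :: "real^'n \<Rightarrow> real^'n^'n"
  assumes sc: "strongly_convex mu f"
    and grad: "\<And>x. (f has_derivative (\<lambda>h. g x \<bullet> h)) (at x)"
    and hess: "\<And>x. (g has_derivative (\<lambda>h. Hs x *v h)) (at x)"
    and lip: "\<And>x y. onorm (\<lambda>v. (Hs x - Hs y) *v v) \<le> H * norm (x - y)"
  shows "f x + g x \<bullet> (y - x) + mu / 2 * (norm (y - x))\<^sup>2 \<le> f y"
proof -
  have H0: "H \<ge> 0" by (rule H_nonneg[OF lip])
  define d where "d = y - x"
  define K0 where "K0 = (norm (Hs x) + H * norm d) * (norm d)\<^sup>2"
  have K0: "K0 \<ge> 0" using H0 by (simp add: K0_def)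
  have "g x \<bullet> d \<le> (f y - f x - mu / 2 * (norm d)\<^sup>2) + t * (mu / 2 * (norm d)\<^sup>2 + K0)"
    if t: "0 < t" "t < 1" for t
  proof -
    let ?S = "closed_segment x (x + t *\<^sub>R d)"
    have dphi: "((\<lambda>z. f z - g x \<bullet> z) has_derivative (\<lambda>h. (g z - g x) \<bullet> h)) (at z within ?S)" for z
    proof -
      have "((\<lambda>z. f z - g x \<bullet> z) has_derivative (\<lambda>h. g z \<bullet> h - g x \<bullet> h)) (at z)"
        by (intro derivative_intros grad)
      then show ?thesis by (simp add: inner_diff_left has_derivative_at_withinI)
    qed
    have bnd: "onorm (\<lambda>h. (g z - g x) \<bullet> h) \<le> (norm (Hs x) + H * norm d) * (t * norm d)" if z: "z \<in> ?S" for z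
    proof -
      have zx: "norm (z - x) \<le> t * norm d" using segment_bound1[OF z] t by simp
      have "g z - g x = (g z - g x - Hs x *v (z - x)) + Hs x *v (z - x)" by simp
      then have "norm (g z - g x) \<le> norm (g z - g x - Hs x *v (z - x)) + norm (Hs x *v (z - x))"
        by (metis norm_triangle_ineq)
      then have "norm (g z - g x) \<le> norm (Hs x *v (z - x)) + H * (norm (z - x))\<^sup>2"
        using taylor_bound[OF hess lip, of z x] by linarith
      also have "\<dots> \<le> norm (Hs x) * norm (z - x) + H * norm (z - x) * norm (z - x)"
        by (simp add: mat_vec_norm power2_eq_square)
      also have "\<dots> = (norm (Hs x) + H * norm (z - x)) * norm (z - x)" by (simp add: algebra_simps)
      also have "\<dots> \<le> (norm (Hs x) + H * norm d) * (t * norm d)"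
      proof (intro mult_mono)
        show "norm (Hs x) + H * norm (z - x) \<le> norm (Hs x) + H * norm d"
        proof -
          have "t * norm d \<le> norm d" using t by (simp add: mult_left_le_one_le)
          then have "norm (z - x) \<le> norm d" using zx by linarith
          then show ?thesis using H0 by (simp add: mult_left_mono)
        qed
      qed (use zx H0 in auto)
      finally show ?thesis using onorm_inner order_trans by blast
    qed
    have "norm ((f (x + t *\<^sub>R d) - g x \<bullet> (x + t *\<^sub>R d)) - (f x - g x \<bullet> x))
        \<le> (norm (Hs x) + H * norm d) * (t * norm d) * norm ((x + t *\<^sub>R d) - x)"
      by (rule differentiable_bound[OF convex_closed_segment dphi bnd]) auto
    also have "\<dots> = t\<^sup>2 * K0" using t by (simp add: K0_def power2_eq_square algebra_simps)
    finally have tay: "t * (g x \<bullet> d) \<le> f (x + t *\<^sub>R d) - f x + t\<^sup>2 * K0"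
      by (simp add: inner_add_right algebra_simps abs_le_iff)
    have "f (t *\<^sub>R y + (1 - t) *\<^sub>R x) \<le> t * f y + (1 - t) * f x - mu / 2 * t * (1 - t) * (norm (y - x))\<^sup>2"
      using sc t unfolding strongly_convex_def by auto
    moreover have "t *\<^sub>R y + (1 - t) *\<^sub>R x = x + t *\<^sub>R d" by (simp add: d_def algebra_simps)
    ultimately have "t * (g x \<bullet> d) \<le> t * f y + (1 - t) * f x - mu / 2 * t * (1 - t) * (norm d)\<^sup>2 - f x + t\<^sup>2 * K0"
      using tay by (simp add: d_def)
    then have "t * (g x \<bullet> d) \<le> t * ((f y - f x - mu / 2 * (norm d)\<^sup>2) + t * (mu / 2 * (norm d)\<^sup>2 + K0))"
      by (simp add: field_simps power2_eq_square)
    then show ?thesis using t by simp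
  qed
  then have "g x \<bullet> d \<le> f y - f x - mu / 2 * (norm d)\<^sup>2" by (rule eps_le)
  then show ?thesis by (simp add: d_def)
qed

lemma hess_lower:
  fixes f :: "real^'n::finite \<Rightarrow> real" and g :: "real^'n \<Rightarrow> real^'n" and Hs :: "real^'n \<Rightarrow> real^'n^'n"
  assumes sc: "strongly_convex mu f"
    and grad: "\<And>x. (f has_derivative (\<lambda>h. g x \<bullet> h)) (at x)"
    and hess: "\<And>x. (g has_derivative (\<lambda>h. Hs x *v h)) (at x)"
    and lip: "\<And>x y. onorm (\<lambda>v. (Hs x - Hs y) *v v) \<le> H * norm (x - y)"
  shows "mu * (norm v)\<^sup>2 \<le> v \<bullet> (Hs x *v v)"
proof -
  have mono: "mu * (norm (y - x))\<^sup>2 \<le> (g y - g x) \<bullet> (y - x)" for x y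
    using sc_first_order[OF sc grad hess lip, of x y] sc_first_order[OF sc grad hess lip, of y x]
    by (simp add: inner_diff_left inner_diff_right norm_minus_commute inner_commute algebra_simps)
  have "mu * (norm v)\<^sup>2 \<le> v \<bullet> (Hs x *v v) + t * (H * norm v ^ 3)" if t: "0 < t" "t < 1" for t
  proof -
    let ?r = "g (x + t *\<^sub>R v) - g x - Hs x *v (t *\<^sub>R v)"
    have r: "norm ?r \<le> H * (t * norm v)\<^sup>2"
      using taylor_bound[OF hess lip, of "x + t *\<^sub>R v" x] t by simp
    have "mu * (t\<^sup>2 * (norm v)\<^sup>2) \<le> (g (x + t *\<^sub>R v) - g x) \<bullet> (t *\<^sub>R v)"
    proof -
      have eq: "(norm (t *\<^sub>R v))\<^sup>2 = t\<^sup>2 * (norm v)\<^sup>2" using t by (simp add: power_mult_distrib)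
      show ?thesis using mono[where x=x and y="x + t *\<^sub>R v"] eq by (metis add_diff_cancel_left')
    qed
    also have "(g (x + t *\<^sub>R v) - g x) \<bullet> (t *\<^sub>R v) = ?r \<bullet> (t *\<^sub>R v) + (Hs x *v (t *\<^sub>R v)) \<bullet> (t *\<^sub>R v)"
      by (simp add: inner_diff_left algebra_simps)
    also have "?r \<bullet> (t *\<^sub>R v) \<le> norm ?r * norm (t *\<^sub>R v)" by (rule norm_cauchy_schwarz)
    also have "norm ?r * norm (t *\<^sub>R v) \<le> H * (t * norm v)\<^sup>2 * (t * norm v)"
      using r t H_nonneg[OF lip] by (intro mult_mono) auto
    also have "(Hs x *v (t *\<^sub>R v)) \<bullet> (t *\<^sub>R v) = t\<^sup>2 * (v \<bullet> (Hs x *v v))"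
      by (simp add: scaleR_matrix_vector_assoc[symmetric] matrix_vector_mult_scaleR inner_commute power2_eq_square)
    finally have "t\<^sup>2 * (mu * (norm v)\<^sup>2) \<le> t\<^sup>2 * (v \<bullet> (Hs x *v v) + t * (H * norm v ^ 3))"
      by (simp add: algebra_simps power2_eq_square power3_eq_cube)
    then show ?thesis using t by simp
  qed
  then show ?thesis by (rule eps_le)
qed

lemma grad_sum_zero:
  fixes f :: "nat \<Rightarrow> real^'n::finite \<Rightarrow> real" and g :: "nat \<Rightarrow> real^'n \<Rightarrow> real^'n"
  assumes n: "n \<ge> 1"
    and grad: "\<And>i x. i < n \<Longrightarrow> (f i has_derivative (\<lambda>h. g i x \<bullet> h)) (at x)"
    and xs_min: "\<And>x. (1 / real n) * (\<Sum>i<n. f i xs) \<le> (1 / real n) * (\<Sum>i<n. f i x)"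
  shows "(\<Sum>i<n. g i xs) = 0"
proof -
  have d: "((\<lambda>x. (1 / real n) * (\<Sum>i<n. f i x)) has_derivative (\<lambda>h. (1 / real n) * (\<Sum>i<n. g i xs \<bullet> h))) (at xs)"
    by (intro derivative_intros grad) auto
  have "(\<lambda>h. (1 / real n) * (\<Sum>i<n. g i xs \<bullet> h)) = (\<lambda>v. 0)"
    by (rule differential_zero_maxmin[OF _ open_UNIV d]) (use xs_min in auto)
  then have "(1 / real n) * (\<Sum>i<n. g i xs \<bullet> (\<Sum>i<n. g i xs)) = 0" by meson
  then have "(\<Sum>i<n. g i xs) \<bullet> (\<Sum>i<n. g i xs) = 0" using n by (simp add: inner_sum_left)
  then show ?thesis by simp
qed

lemma hmat_diff: "Hmat Bi L - Hmat Bi L' = Hmat Bi (L - L')"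
  by (simp add: Hmat_def sum_subtractf[symmetric] scaleR_diff_left)

lemma hmat_hcoef: "is_basis_mat Bi \<Longrightarrow> Hmat Bi (hcoef Bi A) = A"
  unfolding is_basis_mat_def hcoef_def by (metis (mono_tags, lifting) theI')

lemma norm_sq_mat: "(norm (A::real^'n::finite^'m::finite))\<^sup>2 = (\<Sum>j\<in>UNIV. \<Sum>l\<in>UNIV. (A $ j $ l)\<^sup>2)"
  unfolding power2_norm_eq_inner inner_vec_def by (simp add: power2_eq_square)

lemma sum_pairs: "(\<Sum>j\<in>UNIV. \<Sum>l\<in>UNIV. F j l) = (\<Sum>p\<in>UNIV. F (fst p) (snd p))"
proof -
  have "(\<Sum>j\<in>UNIV. \<Sum>l\<in>UNIV. F j l) = (\<Sum>p\<in>UNIV \<times> UNIV. F (fst p) (snd p))"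
    by (subst sum.cartesian_product) (simp add: split_def)
  then show ?thesis by simp
qed

lemma hmat_bound_gen:
  fixes Bi :: "'n::finite \<Rightarrow> 'n \<Rightarrow> real^'n^'n"
  assumes R: "\<And>j l. norm (Bi j l) \<le> R"
  shows "(norm (Hmat Bi c))\<^sup>2 \<le> real (CARD('n) ^ 2) * R\<^sup>2 * (norm c)\<^sup>2"
proof -
  have R0: "R \<ge> 0" using R[of undefined undefined] norm_ge_zero order_trans by blast
  define a :: "real^'n^'n" where "a = (\<chi> j l. \<bar>c $ j $ l\<bar>)"
  define o1 :: "real^'n^'n" where "o1 = (\<chi> j l. 1)"
  have "norm (Hmat Bi c) \<le> (\<Sum>j\<in>UNIV. \<Sum>l\<in>UNIV. norm ((c $ j $ l) *\<^sub>R Bi j l))"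
    unfolding Hmat_def by (rule order_trans[OF norm_sum sum_mono[OF norm_sum]])
  also have "\<dots> \<le> (\<Sum>j\<in>UNIV. \<Sum>l\<in>UNIV. \<bar>c $ j $ l\<bar> * R)"
    by (intro sum_mono) (simp add: R mult_left_mono)
  also have "\<dots> = inner a o1 * R"
    by (simp add: a_def o1_def inner_vec_def sum_distrib_right)
  also have "\<dots> \<le> norm a * norm o1 * R"
    using R0 by (intro mult_right_mono norm_cauchy_schwarz) auto
  finally have 1: "norm (Hmat Bi c) \<le> norm a * norm o1 * R" .
  have na: "(norm a)\<^sup>2 = (norm c)\<^sup>2" by (simp add: norm_sq_mat a_def)
  have no: "(norm o1)\<^sup>2 = real (CARD('n) ^ 2)" unfolding norm_sq_mat by (simp add: o1_def power2_eq_square)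
  have "(norm (Hmat Bi c))\<^sup>2 \<le> (norm a * norm o1 * R)\<^sup>2"
    using 1 by (simp add: power_mono)
  also have "\<dots> = real (CARD('n) ^ 2) * R\<^sup>2 * (norm c)\<^sup>2"
    by (simp add: power_mult_distrib na no)
  finally show ?thesis .
qed

lemma hmat_bound_orth:
  fixes Bi :: "'n::finite \<Rightarrow> 'n \<Rightarrow> real^'n^'n"
  assumes R: "\<And>j l. norm (Bi j l) \<le> R"
    and orth: "\<And>j l j' l'. (j, l) \<noteq> (j', l') \<Longrightarrow> inner (Bi j l) (Bi j' l') = 0"
  shows "(norm (Hmat Bi c))\<^sup>2 \<le> R\<^sup>2 * (norm c)\<^sup>2"
proof -
  have R0: "R \<ge> 0" using R[of undefined undefined] norm_ge_zero order_trans by blast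
  define cc where "cc p = c $ fst p $ snd p" for p
  define BB where "BB p = Bi (fst p) (snd p)" for p
  have H: "Hmat Bi c = (\<Sum>p\<in>UNIV. cc p *\<^sub>R BB p)"
    unfolding Hmat_def cc_def BB_def by (rule sum_pairs)
  have nc: "(norm c)\<^sup>2 = (\<Sum>p\<in>UNIV. (cc p)\<^sup>2)"
    unfolding norm_sq_mat cc_def by (rule sum_pairs)
  have "(norm (Hmat Bi c))\<^sup>2 = (\<Sum>p\<in>UNIV. \<Sum>q\<in>UNIV. cc p * cc q * inner (BB q) (BB p))"
    unfolding H power2_norm_eq_inner inner_sum_left inner_sum_right
    by (simp only: inner_scaleR_left inner_scaleR_right mult.assoc)
  also have "\<dots> = (\<Sum>p\<in>UNIV. (cc p)\<^sup>2 * (norm (BB p))\<^sup>2)"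
  proof (rule sum.cong[OF refl])
    fix p :: "'n \<times> 'n"
    have "(\<Sum>q\<in>UNIV. cc p * cc q * inner (BB q) (BB p)) = (\<Sum>q\<in>UNIV. if q = p then cc p * cc q * inner (BB q) (BB p) else 0)"
      by (rule sum.cong[OF refl]) (auto simp: BB_def orth prod_eq_iff)
    also have "\<dots> = (cc p)\<^sup>2 * (norm (BB p))\<^sup>2"
      by (simp add: power2_norm_eq_inner power2_eq_square[of "cc p"])
    finally show "(\<Sum>q\<in>UNIV. cc p * cc q * inner (BB q) (BB p)) = (cc p)\<^sup>2 * (norm (BB p))\<^sup>2" .
  qed
  also have "\<dots> \<le> (\<Sum>p\<in>UNIV. (cc p)\<^sup>2 * R\<^sup>2)"
    by (intro sum_mono mult_left_mono power_mono) (auto simp: BB_def R)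
  also have "\<dots> = R\<^sup>2 * (norm c)\<^sup>2" by (simp add: nc sum_distrib_left mult.commute)
  finally show ?thesis .
qed

lemma hmat_bound_NB:
  fixes B :: "nat \<Rightarrow> 'n::finite \<Rightarrow> 'n \<Rightarrow> real^'n^'n"
  assumes R: "\<And>i j l. i < n \<Longrightarrow> norm (B i j l) \<le> R" and i: "i < n"
  shows "(norm (Hmat (B i) c))\<^sup>2 \<le> NB n B * R\<^sup>2 * (norm c)\<^sup>2"
proof (cases "\<forall>i<n. \<forall>j l j' l'. (j, l) \<noteq> (j', l') \<longrightarrow> inner (B i j l) (B i j' l') = 0")
  case True
  then show ?thesis using hmat_bound_orth[of "B i" R c] R i by (simp add: NB_def)
next
  case False
  then have "NB n B = real (CARD('n) ^ 2)" unfolding NB_def by (rule if_not_P)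
  then show ?thesis using hmat_bound_gen[of "B i" R c] R i by simp
qed

lemma NB_ge1: "NB n B \<ge> 1"
  by (simp add: NB_def)

lemma matvec_sum: "(\<Sum>i\<in>I. A i) *v (v::real^'n::finite) = (\<Sum>i\<in>I. (A i :: real^'n^'m::finite) *v v)"
  by (induction I rule: infinite_finite_induct) (auto simp: matrix_vector_mult_add_rdistrib)

lemma symm_apply: "symm A *v v = (1/2) *\<^sub>R (A *v v + transpose A *v v)"
  by (simp add: symm_def vec_eq_iff matrix_vector_mult_def sum.distrib sum_distrib_left algebra_simps)

lemma transpose_sum: "transpose (\<Sum>i\<in>I. A i) = (\<Sum>i\<in>I. transpose (A i :: real^'n::finite^'n))"
  by (induction I rule: infinite_finite_induct) (auto simp: transpose_def vec_eq_iff)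

lemma transpose_scale: "transpose (c *\<^sub>R A) = c *\<^sub>R transpose (A :: real^'n::finite^'n)"
  by (simp add: transpose_def vec_eq_iff)

lemma symm_sum_apply:
  "symm ((1 / real n) *\<^sub>R (\<Sum>i<n. A i)) *v v = (1 / real n) *\<^sub>R (\<Sum>i<n. symm (A i :: real^'n::finite^'n) *v v)"
  by (simp add: symm_apply transpose_sum transpose_scale scaleR_matrix_vector_assoc[symmetric]
      matvec_sum sum.distrib scaleR_sum_right algebra_simps)

lemma symm_symm: "transpose A = A \<Longrightarrow> symm A = A"
  by (simp add: symm_def scaleR_2[symmetric])

lemma newton_step:
  fixes n :: nat and g :: "nat \<Rightarrow> real^'n::finite \<Rightarrow> real^'n" and Hs :: "nat \<Rightarrow> real^'n \<Rightarrow> real^'n^'n"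
    and B :: "nat \<Rightarrow> 'n \<Rightarrow> 'n \<Rightarrow> real^'n^'n" and z w :: "nat \<Rightarrow> real^'n" and L :: "nat \<Rightarrow> real^'n^'n"
  assumes n: "n \<ge> 1" and mu: "mu > 0"
    and hl: "\<And>i x v. i < n \<Longrightarrow> mu * (norm v)\<^sup>2 \<le> v \<bullet> (Hs i x *v v)"
    and sym: "\<And>i. i < n \<Longrightarrow> transpose (Hs i xs) = Hs i xs"
    and tay: "\<And>i w. i < n \<Longrightarrow> norm (g i w - g i xs - Hs i xs *v (w - xs)) \<le> H * (norm (w - xs))\<^sup>2"
    and lip1: "\<And>i x y. i < n \<Longrightarrow> norm (Hs i x - Hs i y) \<le> H1 * norm (x - y)"
    and gz: "(\<Sum>i<n. g i xs) = 0"
    and hh: "\<And>i. i < n \<Longrightarrow> Hmat (B i) (hcoef (B i) (Hs i xs)) = Hs i xs"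
    and hb: "\<And>i c. i < n \<Longrightarrow> norm (Hmat (B i) c) \<le> K * norm c"
    and E: "\<And>i. i < n \<Longrightarrow> (H * norm (w i - xs) + 2 * K * norm (L i - hcoef (B i) (Hs i xs))
               + H1 * norm (z i - xs)) * norm (w i - xs) \<le> E"
  shows "mu * norm (bl2_xnext n g Hs B z w L - xs) \<le> E"
proof -
  define Hi where "Hi i = Hmat (B i) (L i)" for i
  define li where "li i = norm (symm (Hi i) - Hs i (z i))" for i
  define Mf where "Mf i v = symm (Hi i) *v v + li i *\<^sub>R v" for i v
  define Mav where "Mav = symm ((1 / real n) *\<^sub>R (\<Sum>i<n. Hi i)) + ((1 / real n) * (\<Sum>i<n. li i)) *\<^sub>R mat 1"
  define gav where "gav = (1 / real n) *\<^sub>R (\<Sum>i<n. (symm (Hi i) + li i *\<^sub>R mat 1) *v w i - g i (w i))"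
  have xn: "bl2_xnext n g Hs B z w L = matrix_inv Mav *v gav"
    unfolding bl2_xnext_def Let_def Mav_def gav_def Hi_def li_def ..
  have Mi: "(symm (Hi i) + li i *\<^sub>R mat 1) *v u = Mf i u" for i u
    by (simp add: Mf_def matrix_vector_mult_add_rdistrib scaleR_matrix_vector_assoc[symmetric])
  have Mlin: "Mf i a - Mf i b = Mf i (a - b)" for i a b
    by (simp add: Mf_def matrix_vector_mult_diff_distrib scaleR_diff_right)
  have lv: "(sum li {..<n} / real n) *\<^sub>R v = (1 / real n) *\<^sub>R (\<Sum>i<n. li i *\<^sub>R v)" for v :: "real^'n"
  proof -
    have eq: "sum li {..<n} *\<^sub>R v = (\<Sum>i<n. li i *\<^sub>R v)" by (rule scaleR_sum_left)
    show ?thesis by (simp add: eq[symmetric])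
  qed
  have Mapp: "Mav *v v = (1 / real n) *\<^sub>R (\<Sum>i<n. Mf i v)" for v
    by (simp add: Mav_def Mf_def matrix_vector_mult_add_rdistrib scaleR_matrix_vector_assoc[symmetric]
        symm_sum_apply sum.distrib scaleR_right_distrib lv)
  have posi: "mu * (norm v)\<^sup>2 \<le> v \<bullet> Mf i v" if i: "i < n" for i v
  proof -
    have "v \<bullet> (symm (Hi i) *v v) = v \<bullet> (Hs i (z i) *v v) + v \<bullet> ((symm (Hi i) - Hs i (z i)) *v v)"
      by (simp add: matrix_vector_mult_diff_rdistrib inner_diff_right)
    moreover have "v \<bullet> ((symm (Hi i) - Hs i (z i)) *v v) \<ge> - (li i * (norm v)\<^sup>2)"
      unfolding li_def by (rule quad_lower)
    moreover have "mu * (norm v)\<^sup>2 \<le> v \<bullet> (Hs i (z i) *v v)" by (rule hl[OF i])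
    ultimately show ?thesis by (simp add: Mf_def inner_add_right power2_norm_eq_inner)
  qed
  have pos: "mu * (norm v)\<^sup>2 \<le> v \<bullet> (Mav *v v)" for v
  proof -
    have "real n * (mu * (norm v)\<^sup>2) = (\<Sum>i<n. mu * (norm v)\<^sup>2)" by simp
    also have "\<dots> \<le> (\<Sum>i<n. v \<bullet> Mf i v)" by (rule sum_mono) (simp add: posi)
    finally have "real n * (mu * (norm v)\<^sup>2) \<le> (\<Sum>i<n. v \<bullet> Mf i v)" .
    moreover have "v \<bullet> (Mav *v v) = (1 / real n) * (\<Sum>i<n. v \<bullet> Mf i v)"
      by (simp add: Mapp inner_sum_right)
    ultimately have "real n * (mu * (norm v)\<^sup>2) \<le> real n * (v \<bullet> (Mav *v v))" using n by simp
    moreover have "real n > 0" using n by simp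
    ultimately show ?thesis by (simp add: mult_le_cancel_left_pos)
  qed
  have low: "mu * norm y \<le> norm (Mav *v y)" for y
  proof (cases "y = 0")
    case False
    have "mu * (norm y)\<^sup>2 \<le> norm y * norm (Mav *v y)"
      using pos[of y] norm_cauchy_schwarz[of y "Mav *v y"] by linarith
    then show ?thesis using False by (simp add: power2_eq_square)
  qed simp
  have "inj ((*v) Mav)"
  proof (rule injI)
    fix a b assume "Mav *v a = Mav *v b"
    then have "Mav *v (a - b) = 0" by (simp add: matrix_vector_mult_diff_distrib)
    then have "mu * norm (a - b) \<le> 0" using low[of "a - b"] by simp
    then show "a = b" using mu by (simp add: mult_le_0_iff)
  qed
  then have "invertible Mav"
    using matrix_left_invertible_injective invertible_left_inverse by blast
  then have "Mav ** matrix_inv Mav = mat 1"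
    unfolding invertible_def matrix_inv_def by (rule someI_ex[THEN conjunct1])
  then have Mx: "Mav *v bl2_xnext n g Hs B z w L = gav"
    by (simp add: xn matrix_vector_mul_assoc)
  have "Mav *v (bl2_xnext n g Hs B z w L - xs) = gav - Mav *v xs"
    by (simp add: matrix_vector_mult_diff_distrib Mx)
  also have "\<dots> = (1 / real n) *\<^sub>R (\<Sum>i<n. Mf i (w i - xs) - (g i (w i) - g i xs))"
  proof -
    have "gav - Mav *v xs = (1 / real n) *\<^sub>R ((\<Sum>i<n. Mf i (w i) - g i (w i)) - (\<Sum>i<n. Mf i xs))"
      by (simp add: gav_def Mi Mapp scaleR_diff_right)
    also have "(\<Sum>i<n. Mf i (w i) - g i (w i)) - (\<Sum>i<n. Mf i xs)
        = (\<Sum>i<n. Mf i (w i - xs) - (g i (w i) - g i xs)) - (\<Sum>i<n. g i xs)"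
      by (simp add: sum_subtractf sum.distrib Mlin[symmetric] algebra_simps)
    finally show ?thesis by (simp add: gz)
  qed
  finally have eq: "Mav *v (bl2_xnext n g Hs B z w L - xs) = (1 / real n) *\<^sub>R (\<Sum>i<n. Mf i (w i - xs) - (g i (w i) - g i xs))" .
  have trm: "norm (Mf i (w i - xs) - (g i (w i) - g i xs)) \<le> E" if i: "i < n" for i
  proof -
    let ?S = "Hs i xs" and ?y = "w i - xs" and ?Ls = "hcoef (B i) (Hs i xs)"
    have a: "norm (symm (Hi i) - ?S) \<le> K * norm (L i - ?Ls)"
    proof -
      have "symm (Hi i) - ?S = symm (Hi i - ?S)"
        using symm_diff[of "Hi i" ?S] symm_symm[OF sym[OF i]] by simp
      then have "norm (symm (Hi i) - ?S) \<le> norm (Hi i - ?S)" using norm_symm by metis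
      also have "Hi i - ?S = Hmat (B i) (L i - ?Ls)"
        using hmat_diff[of "B i" "L i" ?Ls] hh[OF i] by (simp add: Hi_def)
      finally show ?thesis using hb[OF i] by (meson order_trans)
    qed
    have b: "li i \<le> K * norm (L i - ?Ls) + H1 * norm (z i - xs)"
    proof -
      have "li i \<le> norm (symm (Hi i) - ?S) + norm (?S - Hs i (z i))"
        unfolding li_def using norm_triangle_ineq[of "symm (Hi i) - ?S" "?S - Hs i (z i)"] by simp
      moreover have "norm (?S - Hs i (z i)) \<le> H1 * norm (z i - xs)"
        using lip1[OF i, of xs "z i"] by (simp add: norm_minus_commute)
      ultimately show ?thesis using a by linarith
    qed
    have eqn: "Mf i ?y - (g i (w i) - g i xs)
        = ((symm (Hi i) - ?S) *v ?y + li i *\<^sub>R ?y) - (g i (w i) - g i xs - ?S *v ?y)"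
      by (simp add: Mf_def matrix_vector_mult_diff_rdistrib algebra_simps)
    have t1: "norm (((symm (Hi i) - ?S) *v ?y + li i *\<^sub>R ?y) - (g i (w i) - g i xs - ?S *v ?y))
        \<le> norm ((symm (Hi i) - ?S) *v ?y + li i *\<^sub>R ?y) + norm (g i (w i) - g i xs - ?S *v ?y)"
      by (rule norm_triangle_ineq4)
    have t2: "norm ((symm (Hi i) - ?S) *v ?y + li i *\<^sub>R ?y) \<le> norm ((symm (Hi i) - ?S) *v ?y) + norm (li i *\<^sub>R ?y)"
      by (rule norm_triangle_ineq)
    have "norm (Mf i ?y - (g i (w i) - g i xs))
        \<le> norm ((symm (Hi i) - ?S) *v ?y) + norm (li i *\<^sub>R ?y) + norm (g i (w i) - g i xs - ?S *v ?y)"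
      unfolding eqn using t1 t2 by linarith
    also have "\<dots> \<le> K * norm (L i - ?Ls) * norm ?y + li i * norm ?y + H * (norm ?y)\<^sup>2"
    proof (intro add_mono)
      show "norm ((symm (Hi i) - ?S) *v ?y) \<le> K * norm (L i - ?Ls) * norm ?y"
        using mat_vec_norm[of "symm (Hi i) - ?S" ?y] mult_right_mono[OF a norm_ge_zero[of ?y]] by linarith
      show "norm (li i *\<^sub>R ?y) \<le> li i * norm ?y" by (simp add: li_def)
      show "norm (g i (w i) - g i xs - ?S *v ?y) \<le> H * (norm ?y)\<^sup>2" by (rule tay[OF i])
    qed
    also have "\<dots> \<le> K * norm (L i - ?Ls) * norm ?y + (K * norm (L i - ?Ls) + H1 * norm (z i - xs)) * norm ?y + H * (norm ?y)\<^sup>2"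
      using b by (simp add: mult_right_mono)
    also have "\<dots> = (H * norm ?y + 2 * K * norm (L i - ?Ls) + H1 * norm (z i - xs)) * norm ?y"
      by (simp add: algebra_simps power2_eq_square)
    also have "\<dots> \<le> E" by (rule E[OF i])
    finally show ?thesis .
  qed
  have "mu * norm (bl2_xnext n g Hs B z w L - xs) \<le> norm ((1 / real n) *\<^sub>R (\<Sum>i<n. Mf i (w i - xs) - (g i (w i) - g i xs)))"
    using low[of "bl2_xnext n g Hs B z w L - xs"] by (simp only: eq)
  also have "\<dots> \<le> (1 / real n) * (\<Sum>i<n. norm (Mf i (w i - xs) - (g i (w i) - g i xs)))"
    using norm_sum[of "\<lambda>i. Mf i (w i - xs) - (g i (w i) - g i xs)" "{..<n}"]
    by (simp add: divide_right_mono)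
  also have "\<dots> \<le> (1 / real n) * (\<Sum>i<n. E)"
    by (intro mult_left_mono sum_mono trm) auto
  also have "\<dots> = E" using n by simp
  finally show ?thesis .
qed

lemma contr_real:
  fixes a b s d :: real
  assumes d: "0 < d" "d \<le> 1" and s: "0 \<le> s" "s\<^sup>2 = 1 - d" and a: "0 \<le> a" and b: "0 \<le> b"
  shows "((1 + s) * a + s * b)\<^sup>2 \<le> (1 - d / 4) * b\<^sup>2 + (6 / d - 7 / 2) * a\<^sup>2"
proof -
  define P where "P = (1 + s) * a"
  define e where "e = 3 * d / 4"
  have e0: "e > 0" using d by (simp add: e_def)
  have y0: "0 \<le> (e * b - s * P)\<^sup>2" by simp
  then have "2 * (s * P) * b * e \<le> e\<^sup>2 * b\<^sup>2 + (s * P)\<^sup>2"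
    by (simp add: power2_diff power_mult_distrib algebra_simps)
  then have "2 * (s * P) * b \<le> e * b\<^sup>2 + (s * P)\<^sup>2 / e"
    using e0 by (simp add: field_simps power2_eq_square)
  then have "((1 + s) * a + s * b)\<^sup>2 \<le> P\<^sup>2 + e * b\<^sup>2 + (s * P)\<^sup>2 / e + s\<^sup>2 * b\<^sup>2"
    unfolding P_def by (simp add: power2_eq_square algebra_simps)
  also have "\<dots> = P\<^sup>2 + e * b\<^sup>2 + (1 - d) * P\<^sup>2 / e + (1 - d) * b\<^sup>2"
    using s(2) by (simp add: power_mult_distrib)
  also have "\<dots> = (1 - d / 4) * b\<^sup>2 + P\<^sup>2 * ((4 - d) / (3 * d))"
    using d by (simp add: e_def field_simps)
  also have "P\<^sup>2 * ((4 - d) / (3 * d)) \<le> (2 * (2 - d) * a\<^sup>2) * ((4 - d) / (3 * d))"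
  proof (rule mult_right_mono)
    have "(1 + s)\<^sup>2 \<le> 2 * (2 - d)"
    proof -
      have "0 \<le> (1 - s)\<^sup>2" by simp
      then show ?thesis using s by (simp add: power2_diff power2_sum)
    qed
    then show "P\<^sup>2 \<le> 2 * (2 - d) * a\<^sup>2"
      unfolding P_def power_mult_distrib using a by (simp add: mult_right_mono)
    show "0 \<le> (4 - d) / (3 * d)" using d by simp
  qed
  also have "(2 * (2 - d) * a\<^sup>2) * ((4 - d) / (3 * d)) \<le> (6 / d - 7 / 2) * a\<^sup>2"
  proof -
    have "2 * (2 - d) * ((4 - d) / (3 * d)) \<le> 6 / d - 7 / 2"
    proof -
      have dd: "d * d \<le> d" using d by (simp add: mult_left_le_one_le)
      have ex: "4 * (2 - d) * (4 - d) = 32 - 24 * d + 4 * (d * d)" by (simp add: algebra_simps)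
      have 1: "4 * (2 - d) * (4 - d) \<le> 36 - 21 * d" unfolding ex using dd d by linarith
      have 2: "2 * (2 - d) * ((4 - d) / (3 * d)) = (4 * (2 - d) * (4 - d)) / (6 * d)"
        using d by (simp add: field_simps)
      have 3: "6 / d - 7 / 2 = (36 - 21 * d) / (6 * d)" using d by (simp add: field_simps)
      show ?thesis unfolding 2 3 using 1 d by (simp add: divide_right_mono)
    qed
    then have "(2 * (2 - d) * ((4 - d) / (3 * d))) * a\<^sup>2 \<le> (6 / d - 7 / 2) * a\<^sup>2"
      by (rule mult_right_mono) simp
    moreover have "(2 * (2 - d) * a\<^sup>2) * ((4 - d) / (3 * d)) = (2 * (2 - d) * ((4 - d) / (3 * d))) * a\<^sup>2"
      by (simp only: ac_simps)
    ultimately show ?thesis by linarith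
  qed
  finally show ?thesis by simp
qed

lemma contr_step:
  fixes D :: "'v::real_normed_vector \<Rightarrow> 'v"
  assumes c: "contraction_compressor dl D"
  shows "(norm (v + D (u - v)))\<^sup>2 \<le> (1 - dl / 4) * (norm v)\<^sup>2 + (6 / dl - 7 / 2) * (norm u)\<^sup>2"
proof -
  have d: "0 < dl" "dl \<le> 1" and cc: "\<And>A. (norm (A - D A))\<^sup>2 \<le> (1 - dl) * (norm A)\<^sup>2"
    using c unfolding contraction_compressor_def by auto
  define s where "s = sqrt (1 - dl)"
  have s: "0 \<le> s" "s\<^sup>2 = 1 - dl" using d by (auto simp: s_def)
  let ?e = "u - v"
  have r: "norm (?e - D ?e) \<le> s * norm ?e"
  proof -
    have "(norm (?e - D ?e))\<^sup>2 \<le> (s * norm ?e)\<^sup>2" using cc[of ?e] s by (simp add: power_mult_distrib)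
    then show ?thesis using s by (meson mult_nonneg_nonneg norm_ge_zero power2_le_imp_le)
  qed
  have "v + D ?e = u - (?e - D ?e)" by (simp add: algebra_simps)
  then have "norm (v + D ?e) \<le> norm u + norm (?e - D ?e)" using norm_triangle_ineq4[of u "?e - D ?e"] by (simp add: add.commute)
  also have "\<dots> \<le> norm u + s * (norm u + norm v)"
  proof -
    have "s * norm ?e \<le> s * (norm u + norm v)" using s(1) norm_triangle_ineq4[of u v] by (rule mult_left_mono[rotated])
    then show ?thesis using r by linarith
  qed
  finally have "norm (v + D ?e) \<le> (1 + s) * norm u + s * norm v" by (simp add: algebra_simps)
  then have "(norm (v + D ?e))\<^sup>2 \<le> ((1 + s) * norm u + s * norm v)\<^sup>2"
    by (simp add: power_mono)
  also have "\<dots> \<le> (1 - dl / 4) * (norm v)\<^sup>2 + (6 / dl - 7 / 2) * (norm u)\<^sup>2"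
    by (rule contr_real[OF d s]) auto
  finally show ?thesis .
qed

lemma st_suc:
  fixes n g Hs B al et S xi Q C x0 L0 k
  defines "st \<equiv> bl2_state n g Hs B al et S xi Q C x0 L0"
  shows "fst (st (Suc k)) = (\<lambda>i. if i \<in> S k then fst (st k) i + et *\<^sub>R Q i k (bl2_x n g Hs B al et S xi Q C x0 L0 (Suc k) - fst (st k) i) else fst (st k) i)"
    and "snd (snd (st (Suc k))) = (\<lambda>i. if i \<in> S k then snd (snd (st k)) i + al *\<^sub>R C i k (hcoef (B i) (Hs i (fst (st (Suc k)) i)) - snd (snd (st k)) i) else snd (snd (st k)) i)"
    and "fst (snd (st (Suc k))) = (\<lambda>i. if i \<in> S k \<and> xi k i then fst (st (Suc k)) i else fst (snd (st k)) i)"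
    and "bl2_x n g Hs B al et S xi Q C x0 L0 (Suc k) = bl2_xnext n g Hs B (fst (st k)) (fst (snd (st k))) (snd (snd (st k)))"
proof -
  obtain z w L where eq: "st k = (z, w, L)" by (cases "st k")
  define x' where "x' = bl2_xnext n g Hs B z w L"
  define z' where "z' = (\<lambda>i. if i \<in> S k then z i + et *\<^sub>R Q i k (x' - z i) else z i)"
  define L' where "L' = (\<lambda>i. if i \<in> S k then L i + al *\<^sub>R C i k (hcoef (B i) (Hs i (z' i)) - L i) else L i)"
  define w' where "w' = (\<lambda>i. if i \<in> S k \<and> xi k i then z' i else w i)"
  have e1: "st (Suc k) = (z', w', L')"
    unfolding st_def bl2_state.simps(2) eq[unfolded st_def] prod.case Let_def x'_def z'_def L'_def w'_def ..
  have e2: "bl2_x n g Hs B al et S xi Q C x0 L0 (Suc k) = x'"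
    unfolding bl2_x.simps(2) eq[unfolded st_def] prod.case x'_def ..
  show "fst (st (Suc k)) = (\<lambda>i. if i \<in> S k then fst (st k) i + et *\<^sub>R Q i k (bl2_x n g Hs B al et S xi Q C x0 L0 (Suc k) - fst (st k) i) else fst (st k) i)"
    unfolding e1 e2 eq fst_conv z'_def ..
  show "snd (snd (st (Suc k))) = (\<lambda>i. if i \<in> S k then snd (snd (st k)) i + al *\<^sub>R C i k (hcoef (B i) (Hs i (fst (st (Suc k)) i)) - snd (snd (st k)) i) else snd (snd (st k)) i)"
    unfolding e1 eq fst_conv snd_conv L'_def ..
  show "fst (snd (st (Suc k))) = (\<lambda>i. if i \<in> S k \<and> xi k i then fst (st (Suc k)) i else fst (snd (st k)) i)"
    unfolding e1 eq fst_conv snd_conv w'_def ..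
  show "bl2_x n g Hs B al et S xi Q C x0 L0 (Suc k) = bl2_xnext n g Hs B (fst (st k)) (fst (snd (st k))) (snd (snd (st k)))"
    unfolding e2 eq fst_conv snd_conv x'_def ..
qed

lemma st_zero:
  "fst (bl2_state n g Hs B al et S xi Q C x0 L0 0) = (\<lambda>i. x0)"
  "fst (snd (bl2_state n g Hs B al et S xi Q C x0 L0 0)) = (\<lambda>i. x0)"
  "snd (snd (bl2_state n g Hs B al et S xi Q C x0 L0 0)) = L0"
  by simp_all

lemma w_in:
  "\<exists>t\<le>k. fst (snd (bl2_state n g Hs B al et S xi Q C x0 L0 k)) i = fst (bl2_state n g Hs B al et S xi Q C x0 L0 t) i"
proof (induction k)
  case 0
  then show ?case by (intro exI[of _ 0]) simp
next
  case (Suc k)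
  then obtain t where t: "t \<le> k" "fst (snd (bl2_state n g Hs B al et S xi Q C x0 L0 k)) i = fst (bl2_state n g Hs B al et S xi Q C x0 L0 t) i"
    by blast
  show ?case
  proof (cases "i \<in> S k \<and> xi k i")
    case True
    have "fst (snd (bl2_state n g Hs B al et S xi Q C x0 L0 (Suc k))) i = fst (bl2_state n g Hs B al et S xi Q C x0 L0 (Suc k)) i"
      by (simp only: st_suc(3) True if_True conj_absorb)
    then show ?thesis by (intro exI[of _ "Suc k"]) simp
  next
    case False
    have "fst (snd (bl2_state n g Hs B al et S xi Q C x0 L0 (Suc k))) i = fst (snd (bl2_state n g Hs B al et S xi Q C x0 L0 k)) i"
      by (simp only: st_suc(3) False if_False)
    then show ?thesis using t by (intro exI[of _ t]) simp
  qed
qed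

lemma le_div_mult:
  fixes c N D :: real
  assumes "c \<le> N / D" "D \<ge> 0" "N \<ge> 0"
  shows "c * D \<le> N"
proof (cases "D = 0")
  case True then show ?thesis using assms by simp
next
  case False then have "D > 0" using assms by simp
  then show ?thesis using assms(1) by (simp add: pos_le_divide_eq)
qed

lemma sq3: "((a::real) + b + c)\<^sup>2 \<le> 3 * (a\<^sup>2 + b\<^sup>2 + c\<^sup>2)"
proof -
  have "3 * (a\<^sup>2 + b\<^sup>2 + c\<^sup>2) - (a + b + c)\<^sup>2 = (a - b)\<^sup>2 + (a - c)\<^sup>2 + (b - c)\<^sup>2"
    by (simp add: power2_eq_square algebra_simps)
  moreover have "0 \<le> (a - b)\<^sup>2 + (a - c)\<^sup>2 + (b - c)\<^sup>2" by simp
  ultimately show ?thesis by linarith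
qed

lemma E_gen:
  fixes H H1 K nw nz nl rho lam G :: real
  assumes "0 \<le> nw" "0 \<le> nz" "0 \<le> nl"
    and "nw\<^sup>2 \<le> rho" "nz\<^sup>2 \<le> rho" "nl\<^sup>2 \<le> lam"
    and G: "3 * (H\<^sup>2 + H1\<^sup>2) * rho + 12 * K\<^sup>2 * lam \<le> G"
  shows "((H * nw + 2 * K * nl + H1 * nz) * nw)\<^sup>2 \<le> G * rho"
proof -
  have "(H * nw + 2 * K * nl + H1 * nz)\<^sup>2 \<le> 3 * ((H * nw)\<^sup>2 + (2 * K * nl)\<^sup>2 + (H1 * nz)\<^sup>2)"
    by (rule sq3)
  also have "\<dots> = 3 * (H\<^sup>2 * nw\<^sup>2 + 4 * K\<^sup>2 * nl\<^sup>2 + H1\<^sup>2 * nz\<^sup>2)" by (simp add: power_mult_distrib)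
  also have "\<dots> \<le> 3 * (H\<^sup>2 * rho + 4 * K\<^sup>2 * lam + H1\<^sup>2 * rho)"
    using assms by (intro mult_left_mono add_mono) (auto intro: mult_left_mono)
  also have "\<dots> \<le> G" using G by (simp add: algebra_simps)
  finally have 1: "(H * nw + 2 * K * nl + H1 * nz)\<^sup>2 \<le> G" .
  have "((H * nw + 2 * K * nl + H1 * nz) * nw)\<^sup>2 = (H * nw + 2 * K * nl + H1 * nz)\<^sup>2 * nw\<^sup>2"
    by (simp add: power_mult_distrib)
  also have "\<dots> \<le> G * rho"
    using 1 assms(4) order_trans[OF zero_le_power2 1] by (intro mult_mono) auto
  finally show ?thesis .
qed

lemma hull_real_bound:
  fixes x c r :: real
  assumes "x \<in> convex hull (f ` {..k})" "\<And>t. t \<le> k \<Longrightarrow> \<bar>f t - c\<bar> \<le> r"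
  shows "\<bar>x - c\<bar> \<le> r"
proof -
  have "f ` {..k} \<subseteq> cball c r" using assms(2) by (auto simp: dist_real_def abs_minus_commute)
  then have "convex hull (f ` {..k}) \<subseteq> cball c r" by (intro hull_minimal) (auto simp: convex_cball)
  then show ?thesis using assms(1) by (auto simp: dist_real_def abs_minus_commute)
qed

lemma maxabs_ge: "\<bar>A $ j $ l\<bar> \<le> maxabs A"
  unfolding maxabs_def
proof (rule Max_ge)
  have "{\<bar>A $ j $ l\<bar> |j l. True} = (\<lambda>(j, l). \<bar>A $ j $ l\<bar>) ` UNIV" by auto
  then show "finite {\<bar>A $ j $ l\<bar> |j l. True}" by simp
qed auto

lemma norm_sq_vec: "(norm (x::real^'n::finite))\<^sup>2 = (\<Sum>j\<in>UNIV. (x $ j)\<^sup>2)"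
  unfolding power2_norm_eq_inner inner_vec_def by (simp add: power2_eq_square)

lemma vec_bound:
  fixes x :: "real^'n::finite"
  assumes "\<And>j. \<bar>x $ j\<bar> \<le> r"
  shows "(norm x)\<^sup>2 \<le> real CARD('n) * r\<^sup>2"
proof -
  have "(norm x)\<^sup>2 = (\<Sum>j\<in>UNIV. (x $ j)\<^sup>2)" by (rule norm_sq_vec)
  also have "\<dots> \<le> (\<Sum>j\<in>(UNIV::'n set). r\<^sup>2)"
  proof (rule sum_mono)
    fix j show "(x $ j)\<^sup>2 \<le> r\<^sup>2" using power_mono[OF assms[of j] abs_ge_zero[of "x $ j"], of 2] by simp
  qed
  finally show ?thesis by simp
qed

lemma mat_bound:
  fixes A :: "real^'n::finite^'n"
  assumes "\<And>j l. \<bar>A $ j $ l\<bar> \<le> r"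
  shows "(norm A)\<^sup>2 \<le> real CARD('n) ^ 2 * r\<^sup>2"
proof -
  have "(norm A)\<^sup>2 = (\<Sum>j\<in>UNIV. \<Sum>l\<in>UNIV. (A $ j $ l)\<^sup>2)" by (rule norm_sq_mat)
  also have "\<dots> \<le> (\<Sum>j\<in>(UNIV::'n set). \<Sum>l\<in>(UNIV::'n set). r\<^sup>2)"
  proof (intro sum_mono)
    fix j l show "(A $ j $ l)\<^sup>2 \<le> r\<^sup>2" using power_mono[OF assms[of j l] abs_ge_zero[of "A $ j $ l"], of 2] by simp
  qed
  finally show ?thesis by (simp add: power2_eq_square)
qed

lemma R_pos:
  fixes B :: "nat \<Rightarrow> 'n::finite \<Rightarrow> 'n \<Rightarrow> real^'n^'n"
  assumes "is_basis_mat (B 0)" "\<And>j l. norm (B 0 j l) \<le> R"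
  shows "R > 0"
proof (rule ccontr)
  assume "\<not> R > 0"
  then have "B 0 j l = 0" for j l 
  proof -
    have "norm (B 0 j l) \<le> 0" using assms(2)[of j l] \<open>\<not> R > 0\<close> by linarith
    then show ?thesis by simp
  qed
  then have "Hmat (B 0) L = 0" for L by (simp add: Hmat_def)
  moreover obtain L where "mat 1 = Hmat (B 0) L" using assms(1) unfolding is_basis_mat_def by blast
  ultimately have "(mat 1 :: real^'n^'n) = 0" by simp
  then have "(mat 1 :: real^'n^'n) $ undefined $ undefined = 0" by simp
  then show False by (simp add: mat_def)
qed

lemma det_cc: "det_contraction_compressor M dl Cc \<Longrightarrow> s \<in> space M \<Longrightarrow> contraction_compressor dl (Cc s)"
  unfolding det_contraction_compressor_def by auto

theorem theorem4p14:
  fixes n :: nat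
    and f :: "nat \<Rightarrow> real^'n::finite \<Rightarrow> real"
    and g :: "nat \<Rightarrow> real^'n \<Rightarrow> real^'n"
    and Hs :: "nat \<Rightarrow> real^'n \<Rightarrow> real^'n^'n"
    and B :: "nat \<Rightarrow> 'n \<Rightarrow> 'n \<Rightarrow> real^'n^'n"
    and mu H H1 M1 M2 R alpha eta p tau :: real
    and xs x0 :: "real^'n"
    and L0 :: "nat \<Rightarrow> real^'n^'n"
    and M :: "'w measure"
    and S :: "nat \<Rightarrow> 'w \<Rightarrow> nat set"
    and xi :: "nat \<Rightarrow> nat \<Rightarrow> 'w \<Rightarrow> bool"
    and Q :: "nat \<Rightarrow> nat \<Rightarrow> 'w \<Rightarrow> real^'n \<Rightarrow> real^'n"
    and C :: "nat \<Rightarrow> nat \<Rightarrow> 'w \<Rightarrow> real^'n^'n \<Rightarrow> real^'n^'n"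
  assumes n_pos: "n \<ge> 1"
    and mu_pos: "mu > 0"
    and grad: "\<And>i x. i < n \<Longrightarrow> (f i has_derivative (\<lambda>h. g i x \<bullet> h)) (at x)"
    and hess: "\<And>i x. i < n \<Longrightarrow> (g i has_derivative (\<lambda>h. Hs i x *v h)) (at x)"
    and sconv: "\<And>i. i < n \<Longrightarrow> strongly_convex mu (f i)"
    and xs_min: "\<And>x. (1 / real n) * (\<Sum>i<n. f i xs) \<le> (1 / real n) * (\<Sum>i<n. f i x)"
    and basis: "\<And>i. i < n \<Longrightarrow> is_basis_mat (B i)"
    and lipH: "\<And>i x y. i < n \<Longrightarrow> onorm (\<lambda>v. (Hs i x - Hs i y) *v v) \<le> H * norm (x - y)"
    and lipH1: "\<And>i x y. i < n \<Longrightarrow> norm (Hs i x - Hs i y) \<le> H1 * norm (x - y)"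
    and lipM1: "\<And>i x y. i < n \<Longrightarrow>
                  norm (hcoef (B i) (Hs i x) - hcoef (B i) (Hs i y)) \<le> M1 * norm (x - y)"
    and lipM2: "\<And>i x y. i < n \<Longrightarrow>
                  maxabs (hcoef (B i) (Hs i x) - hcoef (B i) (Hs i y)) \<le> M2 * norm (x - y)"
    and boundR: "\<And>i j l. i < n \<Longrightarrow> norm (B i j l) \<le> R"
    and alpha_pos: "alpha > 0" and eta_pos: "eta > 0"
    and p_range: "0 < p" "p \<le> 1"
    and tau_range: "0 < tau" "tau \<le> real n"
    and M_prob: "prob_space M"
    and S_sub: "\<And>k s. s \<in> space M \<Longrightarrow> S k s \<subseteq> {..<n}"
    and S_meas: "\<And>k i. {s \<in> space M. i \<in> S k s} \<in> sets M"
    and S_prob: "\<And>k i. i < n \<Longrightarrow> measure M {s \<in> space M. i \<in> S k s} = tau / real n"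
    and xi_meas: "\<And>k i. {s \<in> space M. xi k i s} \<in> sets M"
    and xi_prob: "\<And>k i. i < n \<Longrightarrow> measure M {s \<in> space M. xi k i s} = p"
  defines "zz \<equiv> \<lambda>s. bl2_z n g Hs B alpha eta (\<lambda>k. S k s) (\<lambda>k i. xi k i s) (\<lambda>i k. Q i k s) (\<lambda>i k. C i k s) x0 L0"
    and "LL \<equiv> \<lambda>s. bl2_L n g Hs B alpha eta (\<lambda>k. S k s) (\<lambda>k i. xi k i s) (\<lambda>i k. Q i k s) (\<lambda>i k. C i k s) x0 L0"
    and "xx \<equiv> \<lambda>s. bl2_x n g Hs B alpha eta (\<lambda>k. S k s) (\<lambda>k i. xi k i s) (\<lambda>i k. Q i k s) (\<lambda>i k. C i k s) x0 L0"
    and "d \<equiv> real CARD('n)"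
    and "Lstar \<equiv> \<lambda>i. hcoef (B i) (Hs i xs)"
  shows
    "(\<forall>omM. \<forall>s\<in>space M.
       ((\<forall>i<n. \<forall>k. unbiased_compressor M omM (Q i k)) \<and> eta \<le> 1 / (omM + 1) \<and>
        (\<forall>i<n. \<forall>j. \<forall>k. zz s k i $ j \<in> convex hull ((\<lambda>t. xx s t $ j) ` {..k})) \<and>
        (\<forall>i<n. \<forall>j l. \<forall>k. LL s k i $ j $ l \<in>
            convex hull ((\<lambda>t. hcoef (B i) (Hs i (zz s t i)) $ j $ l) ` {..k})) \<and>
        (norm (x0 - xs))\<^sup>2 \<le>
          min (mu\<^sup>2 / (d\<^sup>2 * (6 * H\<^sup>2 + 24 * H1\<^sup>2)))
              (mu\<^sup>2 / (96 * d ^ 4 * NB n B * R\<^sup>2 * M2\<^sup>2)))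
       \<longrightarrow>
       (\<forall>i<n. \<forall>k.
          (norm (zz s k i - xs))\<^sup>2 \<le>
             d * min (mu\<^sup>2 / (d\<^sup>2 * (6 * H\<^sup>2 + 24 * H1\<^sup>2)))
                     (mu\<^sup>2 / (96 * d ^ 4 * NB n B * R\<^sup>2 * M2\<^sup>2)) \<and>
          (1 / real n) * (\<Sum>i'<n. (norm (LL s k i' - Lstar i'))\<^sup>2)
             \<le> mu\<^sup>2 / (96 * d * NB n B * R\<^sup>2)))
     \<and>
     (\<forall>deltaM delta. \<forall>s\<in>space M.
       ((\<forall>i<n. \<forall>k. det_contraction_compressor M deltaM (Q i k)) \<and> eta = 1 \<and>
        (\<forall>i<n. \<forall>k. det_contraction_compressor M delta (C i k)) \<and> alpha = 1 \<and>
        (\<forall>i<n. (norm (zz s 0 i - xs))\<^sup>2 \<le>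
           min ((deltaM / 4) * mu\<^sup>2 / ((6 / deltaM - 7 / 2) * (6 * H\<^sup>2 + 24 * H1\<^sup>2)))
               ((delta / 4) * (deltaM / 4) * mu\<^sup>2 /
                  (96 * NB n B * R\<^sup>2 * (6 / deltaM - 7 / 2) * (6 / delta - 7 / 2) * M1\<^sup>2))) \<and>
        (\<forall>i<n. (norm (LL s 0 i - Lstar i))\<^sup>2 \<le>
           (deltaM / 4) * mu\<^sup>2 / (96 * NB n B * R\<^sup>2 * (6 / deltaM - 7 / 2))))
       \<longrightarrow>
       (\<forall>i<n. \<forall>k.
          (norm (zz s k i - xs))\<^sup>2 \<le>
           min ((deltaM / 4) * mu\<^sup>2 / ((6 / deltaM - 7 / 2) * (6 * H\<^sup>2 + 24 * H1\<^sup>2)))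
               ((delta / 4) * (deltaM / 4) * mu\<^sup>2 /
                  (96 * NB n B * R\<^sup>2 * (6 / deltaM - 7 / 2) * (6 / delta - 7 / 2) * M1\<^sup>2)) \<and>
          (norm (LL s k i - Lstar i))\<^sup>2 \<le>
           (deltaM / 4) * mu\<^sup>2 / (96 * NB n B * R\<^sup>2 * (6 / deltaM - 7 / 2))))"
proof -
  have n0: "0 < n" using n_pos by simp
  have R0: "R > 0" by (rule R_pos[of B R, OF basis[OF n0] boundR[OF n0]])
  have NB1: "NB n B \<ge> 1" by (rule NB_ge1)
  have d1: "d \<ge> 1" unfolding d_def using finite_UNIV_card_ge_0[where 'a='n] by simp
  define K where "K = sqrt (NB n B * R\<^sup>2)"
  have K0: "K \<ge> 0" unfolding K_def using NB1 by simp
  have K2: "K\<^sup>2 = NB n B * R\<^sup>2" unfolding K_def using NB1 by simp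
  have H0: "H \<ge> 0" by (rule H_nonneg[OF lipH[OF n0]])
  have H10: "H1 \<ge> 0"
  proof -
    have "0 \<le> H1 * norm (0 - (1::real^'n))" using lipH1[OF n0, of 0 1] norm_ge_zero[of "Hs 0 0 - Hs 0 1"] by linarith
    moreover have "norm (0 - (1::real^'n)) > 0" by simp
    ultimately show ?thesis by (simp add: zero_le_mult_iff)
  qed
  have hl: "mu * (norm v)\<^sup>2 \<le> v \<bullet> (Hs i x *v v)" if i: "i < n" for i x v
    by (rule hess_lower[OF sconv[OF i] grad[OF i] hess[OF i] lipH[OF i]])
  have sym: "transpose (Hs i xs) = Hs i xs" if i: "i < n" for i
    by (rule hess_symm[OF grad[OF i] hess[OF i] lipH[OF i]])
  have tay: "norm (g i w - g i xs - Hs i xs *v (w - xs)) \<le> H * (norm (w - xs))\<^sup>2" if i: "i < n" for i w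
    by (rule taylor_bound[OF hess[OF i] lipH[OF i]])
  have gz: "(\<Sum>i<n. g i xs) = 0" by (rule grad_sum_zero[OF n_pos grad xs_min])
  have hh: "Hmat (B i) (hcoef (B i) (Hs i xs)) = Hs i xs" if i: "i < n" for i
    by (rule hmat_hcoef[OF basis[OF i]])
  have hb: "norm (Hmat (B i) c) \<le> K * norm c" if i: "i < n" for i c
  proof -
    have "(norm (Hmat (B i) c))\<^sup>2 \<le> (K * norm c)\<^sup>2"
      using hmat_bound_NB[OF boundR i, where c=c] by (simp add: power_mult_distrib K2)
    then show ?thesis by (rule power2_le_imp_le) (use K0 in simp)
  qed
  have newton: "\<And>z w L E. (\<And>i. i < n \<Longrightarrow> (H * norm (w i - xs) + 2 * K * norm (L i - Lstar i)
               + H1 * norm (z i - xs)) * norm (w i - xs) \<le> E) \<Longrightarrow> mu * norm (bl2_xnext n g Hs B z w L - xs) \<le> E"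
    unfolding Lstar_def by (rule newton_step[OF n_pos mu_pos hl sym tay lipH1 gz hh hb])
  have newton2: "(norm (bl2_xnext n g Hs B z w L - xs))\<^sup>2 \<le> G * rho / mu\<^sup>2"
    if bnd: "\<And>i. i < n \<Longrightarrow> (norm (w i - xs))\<^sup>2 \<le> rho \<and> (norm (z i - xs))\<^sup>2 \<le> rho \<and> (norm (L i - Lstar i))\<^sup>2 \<le> lam"
      and G: "3 * (H\<^sup>2 + H1\<^sup>2) * rho + 12 * K\<^sup>2 * lam \<le> G" for z w L G rho lam
  proof -
    have eb: "((H * norm (w i - xs) + 2 * K * norm (L i - Lstar i) + H1 * norm (z i - xs)) * norm (w i - xs))\<^sup>2 \<le> G * rho"
      if i: "i < n" for i
      using bnd[OF i] by (intro E_gen[OF _ _ _ _ _ _ G]) auto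
    have A: "mu * norm (bl2_xnext n g Hs B z w L - xs) \<le> sqrt (G * rho)"
      by (rule newton) (rule real_le_rsqrt[OF eb])
    have B: "0 \<le> mu * norm (bl2_xnext n g Hs B z w L - xs)" using mu_pos by simp
    have "(mu * norm (bl2_xnext n g Hs B z w L - xs))\<^sup>2 \<le> (sqrt (G * rho))\<^sup>2"
      by (rule power_mono[OF A B])
    moreover have "0 \<le> G * rho" using eb[OF n0] zero_le_power2[of "(H * norm (w 0 - xs) + 2 * K * norm (L 0 - Lstar 0) + H1 * norm (z 0 - xs)) * norm (w 0 - xs)"] by linarith
    ultimately have "(mu * norm (bl2_xnext n g Hs B z w L - xs))\<^sup>2 \<le> G * rho" by simp
    then show ?thesis using mu_pos by (simp add: power_mult_distrib pos_le_divide_eq mult.commute)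
  qed
  show ?thesis
    apply (rule conjI)
    subgoal
      apply (rule allI, rule ballI, rule impI)
      subgoal premises prems for omM s
      proof -
        define c3 where "c3 = min (mu\<^sup>2 / (d\<^sup>2 * (6 * H\<^sup>2 + 24 * H1\<^sup>2))) (mu\<^sup>2 / (96 * d ^ 4 * NB n B * R\<^sup>2 * M2\<^sup>2))"
        define st where "st = bl2_state n g Hs B alpha eta (\<lambda>k. S k s) (\<lambda>k i. xi k i s) (\<lambda>i k. Q i k s) (\<lambda>i k. C i k s) x0 L0"
        note zc = conjunct1[OF conjunct2[OF conjunct2[OF prems(2)]], rule_format]
        note Lc = conjunct1[OF conjunct2[OF conjunct2[OF conjunct2[OF prems(2)]]], rule_format]
        have x0b: "(norm (x0 - xs))\<^sup>2 \<le> c3" unfolding c3_def by (rule conjunct2[OF conjunct2[OF conjunct2[OF conjunct2[OF prems(2)]]]])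
        have c30: "c3 \<ge> 0" using x0b zero_le_power2[of "norm (x0 - xs)"] by linarith
        have c3a: "c3 * (d\<^sup>2 * (6 * H\<^sup>2 + 24 * H1\<^sup>2)) \<le> mu\<^sup>2"
          by (rule le_div_mult) (auto simp: c3_def)
        have c3b: "c3 * (96 * d ^ 4 * NB n B * R\<^sup>2 * M2\<^sup>2) \<le> mu\<^sup>2"
          by (rule le_div_mult) (use NB1 d1 in \<open>auto simp: c3_def\<close>)
        have zz_st: "zz s k = fst (st k)" for k unfolding zz_def bl2_z_def st_def ..
        have LL_st: "LL s k = snd (snd (st k))" for k unfolding LL_def bl2_L_def st_def ..
        have xx_suc: "xx s (Suc k) = bl2_xnext n g Hs B (fst (st k)) (fst (snd (st k))) (snd (snd (st k)))" for k
          unfolding xx_def st_def by (rule st_suc(4))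
        have xx0: "xx s 0 = x0" by (simp add: xx_def)
        define lam1 where "lam1 = mu\<^sup>2 / (96 * d * NB n B * R\<^sup>2)"
        have drv: "(\<forall>t\<le>k. \<forall>i<n. (norm (zz s t i - xs))\<^sup>2 \<le> d * c3) \<and> (\<forall>i<n. (norm (LL s k i - Lstar i))\<^sup>2 \<le> lam1)"
          if P: "\<forall>t\<le>k. (norm (xx s t - xs))\<^sup>2 \<le> c3" for k
        proof -
          have zb: "(norm (zz s t i - xs))\<^sup>2 \<le> d * c3" if t: "t \<le> k" and i: "i < n" for t i
          proof -
            have "\<bar>(zz s t i - xs) $ j\<bar> \<le> sqrt c3" for j
            proof -
              have "\<bar>zz s t i $ j - xs $ j\<bar> \<le> sqrt c3"
              proof (rule hull_real_bound[OF zc[OF i]])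
                fix t' assume "t' \<le> t"
                then have "(norm (xx s t' - xs))\<^sup>2 \<le> c3" using P t by auto
                then have "norm (xx s t' - xs) \<le> sqrt c3" by (rule real_le_rsqrt)
                moreover have "\<bar>(xx s t' - xs) $ j\<bar> \<le> norm (xx s t' - xs)" by (rule component_le_norm_cart)
                ultimately show "\<bar>xx s t' $ j - xs $ j\<bar> \<le> sqrt c3" by simp
              qed
              then show ?thesis by simp
            qed
            then have "(norm (zz s t i - xs))\<^sup>2 \<le> real CARD('n) * (sqrt c3)\<^sup>2" by (rule vec_bound)
            then show ?thesis using c30 by (simp add: d_def)
          qed
          have Lb: "(norm (LL s k i - Lstar i))\<^sup>2 \<le> lam1" if i: "i < n" for i
          proof -
            have "\<bar>(LL s k i - Lstar i) $ j $ l\<bar> \<le> \<bar>M2\<bar> * sqrt (d * c3)" for j l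
            proof -
              have "\<bar>LL s k i $ j $ l - Lstar i $ j $ l\<bar> \<le> \<bar>M2\<bar> * sqrt (d * c3)"
              proof (rule hull_real_bound[OF Lc[OF i]])
                fix t assume t: "t \<le> k"
                have "\<bar>(hcoef (B i) (Hs i (zz s t i)) - hcoef (B i) (Hs i xs)) $ j $ l\<bar>
                    \<le> maxabs (hcoef (B i) (Hs i (zz s t i)) - hcoef (B i) (Hs i xs))" by (rule maxabs_ge)
                also have "\<dots> \<le> M2 * norm (zz s t i - xs)" by (rule lipM2[OF i])
                also have "\<dots> \<le> \<bar>M2\<bar> * sqrt (d * c3)"
                proof -
                  have "norm (zz s t i - xs) \<le> sqrt (d * c3)" by (rule real_le_rsqrt[OF zb[OF t i]])
                  then have "\<bar>M2\<bar> * norm (zz s t i - xs) \<le> \<bar>M2\<bar> * sqrt (d * c3)" by (simp add: mult_left_mono)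
                  moreover have "M2 * norm (zz s t i - xs) \<le> \<bar>M2\<bar> * norm (zz s t i - xs)" by (simp add: mult_right_mono)
                  ultimately show ?thesis by linarith
                qed
                finally show "\<bar>hcoef (B i) (Hs i (zz s t i)) $ j $ l - Lstar i $ j $ l\<bar> \<le> \<bar>M2\<bar> * sqrt (d * c3)"
                  by (simp add: Lstar_def)
              qed
              then show ?thesis by simp
            qed
            then have "(norm (LL s k i - Lstar i))\<^sup>2 \<le> real CARD('n) ^ 2 * (\<bar>M2\<bar> * sqrt (d * c3))\<^sup>2"
              by (rule mat_bound)
            also have "\<dots> = d\<^sup>2 * (M2\<^sup>2 * (d * c3))"
            proof -
              have "(\<bar>M2\<bar> * sqrt (d * c3))\<^sup>2 = M2\<^sup>2 * (d * c3)" using c30 d1 by (simp add: power_mult_distrib)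
              then show ?thesis by (simp add: d_def)
            qed
            also have "\<dots> = d ^ 3 * M2\<^sup>2 * c3" by (simp add: power2_eq_square power3_eq_cube algebra_simps)
            also have "\<dots> \<le> lam1"
            proof -
              have pos: "96 * d * NB n B * R\<^sup>2 > 0" using d1 NB1 R0 by simp
              have eqX: "d ^ 3 * M2\<^sup>2 * c3 * (96 * d * NB n B * R\<^sup>2) = c3 * (96 * d ^ 4 * NB n B * R\<^sup>2 * M2\<^sup>2)"
              proof -
                have d4: "d ^ 4 = d ^ 3 * d" by (simp add: power3_eq_cube power4_eq_xxxx)
                show ?thesis by (simp only: d4 ac_simps)
              qed
              have "d ^ 3 * M2\<^sup>2 * c3 * (96 * d * NB n B * R\<^sup>2) \<le> mu\<^sup>2" unfolding eqX by (rule c3b)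
              then show ?thesis unfolding lam1_def using pos by (simp add: pos_le_divide_eq)
            qed
            finally show ?thesis .
          qed
          show ?thesis using zb Lb by blast
        qed
        have P: "\<forall>t\<le>k. (norm (xx s t - xs))\<^sup>2 \<le> c3" for k
        proof (induction k)
          case 0
          then show ?case using x0b xx0 by simp
        next
          case (Suc k)
          have D: "(\<forall>t\<le>k. \<forall>i<n. (norm (zz s t i - xs))\<^sup>2 \<le> d * c3) \<and> (\<forall>i<n. (norm (LL s k i - Lstar i))\<^sup>2 \<le> lam1)"
            by (rule drv[OF Suc.IH])
          have "(norm (xx s (Suc k) - xs))\<^sup>2 \<le> (mu\<^sup>2 / d) * (d * c3) / mu\<^sup>2"
            unfolding xx_suc
          proof (rule newton2)
            fix i assume i: "i < n"
            obtain t where t: "t \<le> k" "fst (snd (st k)) i = fst (st t) i"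
              using w_in unfolding st_def by blast
            show "(norm (fst (snd (st k)) i - xs))\<^sup>2 \<le> d * c3 \<and> (norm (fst (st k) i - xs))\<^sup>2 \<le> d * c3
                  \<and> (norm (snd (snd (st k)) i - Lstar i))\<^sup>2 \<le> lam1"
              using D t i unfolding zz_st LL_st by auto
          next
            have k2: "12 * K\<^sup>2 * lam1 = mu\<^sup>2 / (8 * d)"
              unfolding K2 lam1_def using R0 NB1 d1 by (simp add: field_simps)
            have h: "3 * (H\<^sup>2 + H1\<^sup>2) * (d * c3) \<le> mu\<^sup>2 / (2 * d)"
            proof -
              have "6 * (H\<^sup>2 + H1\<^sup>2) * (d\<^sup>2 * c3) \<le> c3 * (d\<^sup>2 * (6 * H\<^sup>2 + 24 * H1\<^sup>2))"
                using c30 by (simp add: algebra_simps mult_left_mono)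
              then have "6 * (H\<^sup>2 + H1\<^sup>2) * (d\<^sup>2 * c3) \<le> mu\<^sup>2" using c3a by linarith
              then show ?thesis using d1 by (simp add: field_simps power2_eq_square)
            qed
            have "mu\<^sup>2 / (2 * d) + mu\<^sup>2 / (8 * d) \<le> mu\<^sup>2 / d" using d1 by (simp add: field_simps)
            then show "3 * (H\<^sup>2 + H1\<^sup>2) * (d * c3) + 12 * K\<^sup>2 * lam1 \<le> mu\<^sup>2 / d" using h k2 by linarith
          qed
          also have "\<dots> = c3" using d1 mu_pos by (simp add: field_simps)
          finally have "(norm (xx s (Suc k) - xs))\<^sup>2 \<le> c3" .
          then show ?case using Suc.IH le_Suc_eq by auto
        qed
        show ?thesis
          unfolding c3_def[symmetric]
        proof (intro allI impI conjI)
          fix i k assume i: "i < n"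
          show "(norm (zz s k i - xs))\<^sup>2 \<le> d * c3" using drv[OF P[of k]] i by auto
          have "(1 / real n) * (\<Sum>i'<n. (norm (LL s k i' - Lstar i'))\<^sup>2) \<le> (1 / real n) * (\<Sum>i'<n. lam1)"
            using drv[OF P[of k]] by (intro mult_left_mono sum_mono) auto
          also have "\<dots> = lam1" using n0 by simp
          finally show "(1 / real n) * (\<Sum>i'<n. (norm (LL s k i' - Lstar i'))\<^sup>2) \<le> mu\<^sup>2 / (96 * d * NB n B * R\<^sup>2)"
            by (simp add: lam1_def)
        qed
      qed
      done
    subgoal
      apply (rule allI, rule allI, rule ballI, rule impI)
      subgoal premises prems for deltaM delta s
      proof -
        define c4 where "c4 = min ((deltaM / 4) * mu\<^sup>2 / ((6 / deltaM - 7 / 2) * (6 * H\<^sup>2 + 24 * H1\<^sup>2)))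
               ((delta / 4) * (deltaM / 4) * mu\<^sup>2 /
                  (96 * NB n B * R\<^sup>2 * (6 / deltaM - 7 / 2) * (6 / delta - 7 / 2) * M1\<^sup>2))"
        define cL where "cL = (deltaM / 4) * mu\<^sup>2 / (96 * NB n B * R\<^sup>2 * (6 / deltaM - 7 / 2))"
        define BM where "BM = 6 / deltaM - 7 / 2"
        define BC where "BC = 6 / delta - 7 / 2"
        define st where "st = bl2_state n g Hs B alpha eta (\<lambda>k. S k s) (\<lambda>k i. xi k i s) (\<lambda>i k. Q i k s) (\<lambda>i k. C i k s) x0 L0"
        note Qd = conjunct1[OF prems(2), rule_format]
        note e1 = conjunct1[OF conjunct2[OF prems(2)]]
        note Cd = conjunct1[OF conjunct2[OF conjunct2[OF prems(2)]], rule_format]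
        note a1 = conjunct1[OF conjunct2[OF conjunct2[OF conjunct2[OF prems(2)]]]]
        have z0b: "\<And>i. i < n \<Longrightarrow> (norm (zz s 0 i - xs))\<^sup>2 \<le> c4"
          unfolding c4_def using conjunct1[OF conjunct2[OF conjunct2[OF conjunct2[OF conjunct2[OF prems(2)]]]]] by blast
        have L0b: "\<And>i. i < n \<Longrightarrow> (norm (LL s 0 i - Lstar i))\<^sup>2 \<le> cL"
          unfolding cL_def using conjunct2[OF conjunct2[OF conjunct2[OF conjunct2[OF conjunct2[OF prems(2)]]]]] by blast
        have cQ: "contraction_compressor deltaM (Q i k s)" if i: "i < n" for i k
          by (rule det_cc[OF Qd[OF i] prems(1)])
        have cC: "contraction_compressor delta (C i k s)" if i: "i < n" for i k
          by (rule det_cc[OF Cd[OF i] prems(1)])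
        have dM: "0 < deltaM" "deltaM \<le> 1" using cQ[OF n0] unfolding contraction_compressor_def by auto
        have dC: "0 < delta" "delta \<le> 1" using cC[OF n0] unfolding contraction_compressor_def by auto
        have BMp: "BM > 0"
        proof -
          have "6 \<le> 6 / deltaM" using dM by (simp add: field_simps)
          then show ?thesis unfolding BM_def by linarith
        qed
        have BCp: "BC > 0"
        proof -
          have "6 \<le> 6 / delta" using dC by (simp add: field_simps)
          then show ?thesis unfolding BC_def by linarith
        qed
        have c40: "c4 \<ge> 0" using z0b[OF n0] zero_le_power2[of "norm (zz s 0 0 - xs)"] by linarith
        have cL0: "cL \<ge> 0" using L0b[OF n0] zero_le_power2[of "norm (LL s 0 0 - Lstar 0)"] by linarith
        have c4a: "c4 * (BM * (6 * H\<^sup>2 + 24 * H1\<^sup>2)) \<le> (deltaM / 4) * mu\<^sup>2"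
          by (rule le_div_mult) (use BMp dM in \<open>auto simp: c4_def BM_def\<close>)
        have c4b: "c4 * (96 * NB n B * R\<^sup>2 * BM * BC * M1\<^sup>2) \<le> (delta / 4) * (deltaM / 4) * mu\<^sup>2"
          by (rule le_div_mult) (use BMp BCp dM dC NB1 in \<open>auto simp: c4_def BM_def BC_def\<close>)
        have cpos: "96 * NB n B * R\<^sup>2 * BM > 0" using NB1 R0 BMp by simp
        have cLq: "cL = ((deltaM / 4) * mu\<^sup>2) / (96 * NB n B * R\<^sup>2 * BM)" unfolding cL_def BM_def ..
        have cLe: "cL * (96 * NB n B * R\<^sup>2 * BM) = (deltaM / 4) * mu\<^sup>2"
          using nonzero_eq_divide_eq[of "96 * NB n B * R\<^sup>2 * BM" cL "(deltaM / 4) * mu\<^sup>2"] cLq cpos BMp NB1 R0 by simp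
        have zz_st: "zz s k = fst (st k)" for k unfolding zz_def bl2_z_def st_def ..
        have LL_st: "LL s k = snd (snd (st k))" for k unfolding LL_def bl2_L_def st_def ..
        have xx_suc: "xx s (Suc k) = bl2_xnext n g Hs B (fst (st k)) (fst (snd (st k))) (snd (snd (st k)))" for k
          unfolding xx_def st_def by (rule st_suc(4))
        have z_suc: "zz s (Suc k) i = (if i \<in> S k s then zz s k i + eta *\<^sub>R Q i k s (xx s (Suc k) - zz s k i) else zz s k i)" for k i
          unfolding zz_st st_def xx_def by (simp only: st_suc(1))
        have L_suc: "LL s (Suc k) i = (if i \<in> S k s then LL s k i + alpha *\<^sub>R C i k s (hcoef (B i) (Hs i (zz s (Suc k) i)) - LL s k i) else LL s k i)" for k i
          unfolding zz_st LL_st st_def by (simp only: st_suc(2))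
        define th where "th = (deltaM / 4) / BM"
        have Qk: "\<forall>t\<le>k. \<forall>i<n. (norm (zz s t i - xs))\<^sup>2 \<le> c4 \<and> (norm (LL s t i - Lstar i))\<^sup>2 \<le> cL" for k
        proof (induction k)
          case 0
          then show ?case using z0b L0b by auto
        next
          case (Suc k)
          have X: "(norm (xx s (Suc k) - xs))\<^sup>2 \<le> (th * mu\<^sup>2) * c4 / mu\<^sup>2"
            unfolding xx_suc
          proof (rule newton2)
            fix i assume i: "i < n"
            obtain t where t: "t \<le> k" "fst (snd (st k)) i = fst (st t) i"
              using w_in unfolding st_def by blast
            show "(norm (fst (snd (st k)) i - xs))\<^sup>2 \<le> c4 \<and> (norm (fst (st k) i - xs))\<^sup>2 \<le> c4
                  \<and> (norm (snd (snd (st k)) i - Lstar i))\<^sup>2 \<le> cL"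
              using Suc.IH t i unfolding zz_st LL_st by auto
          next
            have k2: "12 * K\<^sup>2 * cL = th * mu\<^sup>2 / 8"
            proof -
              have "12 * K\<^sup>2 * cL * (96 * BM) = 12 * (cL * (96 * NB n B * R\<^sup>2 * BM))" unfolding K2 by (simp add: algebra_simps)
              also have "\<dots> = 12 * ((deltaM / 4) * mu\<^sup>2)" by (simp add: cLe)
              finally show ?thesis unfolding th_def using BMp by (simp add: field_simps)
            qed
            have h: "3 * (H\<^sup>2 + H1\<^sup>2) * c4 \<le> th * mu\<^sup>2 / 2"
            proof -
              have "6 * (H\<^sup>2 + H1\<^sup>2) * c4 * BM \<le> c4 * (BM * (6 * H\<^sup>2 + 24 * H1\<^sup>2))"
                using c40 BMp by (simp add: algebra_simps mult_left_mono)
              then have "6 * (H\<^sup>2 + H1\<^sup>2) * c4 * BM \<le> (deltaM / 4) * mu\<^sup>2" using c4a by linarith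
              then show ?thesis unfolding th_def using BMp by (simp add: field_simps)
            qed
            have "th * mu\<^sup>2 / 2 + th * mu\<^sup>2 / 8 \<le> th * mu\<^sup>2"
              using BMp dM unfolding th_def by (simp add: field_simps)
            then show "3 * (H\<^sup>2 + H1\<^sup>2) * c4 + 12 * K\<^sup>2 * cL \<le> th * mu\<^sup>2" using h k2 by linarith
          qed
          also have "\<dots> = th * c4" using mu_pos by simp
          finally have X: "(norm (xx s (Suc k) - xs))\<^sup>2 \<le> th * c4" .
          have zs: "(norm (zz s (Suc k) i - xs))\<^sup>2 \<le> c4" if i: "i < n" for i
          proof (cases "i \<in> S k s")
            case True
            let ?z = "zz s k i" and ?x = "xx s (Suc k)"
            have eqz: "zz s (Suc k) i - xs = (?z - xs) + Q i k s ((?x - xs) - (?z - xs))"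
              using True by (simp add: z_suc e1)
            have "(norm (zz s (Suc k) i - xs))\<^sup>2 \<le> (1 - deltaM / 4) * (norm (?z - xs))\<^sup>2 + BM * (norm (?x - xs))\<^sup>2"
              unfolding eqz BM_def by (rule contr_step[OF cQ[OF i]])
            also have "\<dots> \<le> (1 - deltaM / 4) * c4 + BM * (th * c4)"
              using Suc.IH i X dM BMp by (intro add_mono mult_left_mono) auto
            also have "\<dots> = c4" unfolding th_def using BMp by (simp add: field_simps)
            finally show ?thesis .
          next
            case False
            then show ?thesis using z_suc[of k i] Suc.IH i by auto
          qed
          have Ls: "(norm (LL s (Suc k) i - Lstar i))\<^sup>2 \<le> cL" if i: "i < n" for i
          proof (cases "i \<in> S k s")
            case True
            let ?L = "LL s k i" and ?h = "hcoef (B i) (Hs i (zz s (Suc k) i))"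
            have eqL: "LL s (Suc k) i - Lstar i = (?L - Lstar i) + C i k s ((?h - Lstar i) - (?L - Lstar i))"
              using True by (simp add: L_suc a1)
            have "(norm (LL s (Suc k) i - Lstar i))\<^sup>2 \<le> (1 - delta / 4) * (norm (?L - Lstar i))\<^sup>2 + BC * (norm (?h - Lstar i))\<^sup>2"
              unfolding eqL BC_def by (rule contr_step[OF cC[OF i]])
            also have "\<dots> \<le> (1 - delta / 4) * cL + BC * (M1\<^sup>2 * c4)"
            proof (intro add_mono mult_left_mono)
              show "(norm (?L - Lstar i))\<^sup>2 \<le> cL" using Suc.IH i by auto
              have m: "norm (?h - Lstar i) \<le> M1 * norm (zz s (Suc k) i - xs)"
                unfolding Lstar_def by (rule lipM1[OF i])
              have "(norm (?h - Lstar i))\<^sup>2 \<le> (M1 * norm (zz s (Suc k) i - xs))\<^sup>2"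
                by (rule power_mono[OF m norm_ge_zero])
              also have "\<dots> = M1\<^sup>2 * (norm (zz s (Suc k) i - xs))\<^sup>2" by (simp add: power_mult_distrib)
              also have "\<dots> \<le> M1\<^sup>2 * c4" by (rule mult_left_mono[OF zs[OF i]]) simp
              finally show "(norm (?h - Lstar i))\<^sup>2 \<le> M1\<^sup>2 * c4" .
            qed (use dC BCp in auto)
            also have "\<dots> \<le> cL"
            proof -
              have "BC * (M1\<^sup>2 * c4) * (96 * NB n B * R\<^sup>2 * BM) = c4 * (96 * NB n B * R\<^sup>2 * BM * BC * M1\<^sup>2)"
                by (simp only: ac_simps)
              also have "\<dots> \<le> (delta / 4) * (deltaM / 4) * mu\<^sup>2" by (rule c4b)
              also have "\<dots> = (delta / 4) * ((deltaM / 4) * mu\<^sup>2)" by (simp only: mult.assoc)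
              also have "\<dots> = (delta / 4) * (cL * (96 * NB n B * R\<^sup>2 * BM))" by (simp only: cLe)
              also have "\<dots> = (delta / 4) * cL * (96 * NB n B * R\<^sup>2 * BM)" by (simp only: mult.assoc)
              finally have fin: "BC * (M1\<^sup>2 * c4) * (96 * NB n B * R\<^sup>2 * BM) \<le> (delta / 4) * cL * (96 * NB n B * R\<^sup>2 * BM)" .
              have f2: "BC * (M1\<^sup>2 * c4) \<le> (delta / 4) * cL"
                using fin mult_le_cancel_right_pos[OF cpos] by blast
              have e: "(1 - delta / 4) * cL + BC * (M1\<^sup>2 * c4) = cL - ((delta / 4) * cL - BC * (M1\<^sup>2 * c4))"
                by (simp add: algebra_simps)
              show ?thesis unfolding e using f2 by linarith
            qed
            finally show ?thesis .
          next
            case False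
            then show ?thesis using L_suc[of k i] Suc.IH i by auto
          qed
          show ?case using Suc.IH zs Ls le_Suc_eq by auto
        qed
        show ?thesis
          unfolding c4_def[symmetric] cL_def[symmetric]
        proof (intro allI impI conjI)
          fix i k assume i: "i < n"
          show "(norm (zz s k i - xs))\<^sup>2 \<le> c4" using Qk[of k] i by auto
          show "(norm (LL s k i - Lstar i))\<^sup>2 \<le> cL" using Qk[of k] i by auto
        qed
      qed
      done
    done
qed

end
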